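(* Let $H$ be a weak Hopf algebra, and in ${H_{par}^w}$ put $E_h=[h_1][S(h_2)]$ and $\tilde E_h=[S(h_1)][h_2]$ for $h\in H$. Then for all $h,k\in H$: (a) $E_k[S(h)]=[S(h_1)]E_{h_2k}$; (b) $[h]E_k=E_{h_1k}[h_2]$; (c) $E_{h_1}E_{h_2}=E_h$; (d) $\tilde E_k[h]=[h_1]\tilde E_{kh_2}$; (e) $[S(h)]\tilde E_k=\tilde E_{kh_1}[S(h_2)]$; (f) $\tilde E_{h_1}\tilde E_{h_2}=\tilde E_h$; (g) $[h]E_k=[h_1]E_k\tilde E_{h_2}$; (h) $E_k[S(h)]=\tilde E_{h_1}E_k[S(h_2)]$; (i) $\tilde E_k[h]=E_{h_1}\tilde E_k[h_2]$; (j) $[S(h)]\tilde E_k=[S(h_1)]\tilde E_kE_{h_2}$; (k) $E_h\tilde E_k=\tilde E_kE_h$; (l) if $S$ is invertible, $\tilde E_{kS^{-1}(h_3)h_1}\tilde E_{h_2}=\tilde E_h\tilde E_k$; (m) $E_{h_1S(h_3)}E_{h_2}=E_h$; (n) if $H$ is cocommutative, $E_hE_k=E_kE_h$.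
   Context: All algebras are associative and unital over a field $\Bbbk$; Sweedler notation $\Delta(h)=h_1\otimes h_2$, $\Delta^2(h)=h_1\otimes h_2\otimes h_3$. A weak Hopf algebra is $(H,m,u,\Delta,\varepsilon,S)$ with $H$ an algebra, $(H,\Delta,\varepsilon)$ a coalgebra, and for all $g,h,k$: $\Delta(kh)=\Delta(k)\Delta(h)$; $\varepsilon(kh_1)\varepsilon(h_2g)=\varepsilon(khg)=\varepsilon(kh_2)\varepsilon(h_1g)$; $(1\otimes\Delta(1))(\Delta(1)\otimes1)=\Delta^2(1)=(\Delta(1)\otimes1)(1\otimes\Delta(1))$; $h_1S(h_2)=\varepsilon(1_1h)1_2$; $S(h_1)h_2=1_1\varepsilon(h1_2)$; $S(h)=S(h_1)h_2S(h_3)$, where $\Delta(1)=1_1\otimes1_2$. ${H_{par}^w}=T(H)/I$, where $T(H)$ is the tensor algebra of the vector space $H$ and $I$ is the ideal generated by, for all $h,k\in H$: $1_H-1_{T(H)}$; $h\otimes k_1\otimes S(k_2)-hk_1\otimes S(k_2)$; $h\otimes S(k_1)\otimes k_2-hS(k_1)\otimes k_2$; $h_1\otimes S(h_2)\otimes k-h_1\otimes S(h_2)k$; $S(h_1)\otimes h_2\otimes k-S(h_1)\otimes h_2k$; $h-h_1\otimes S(h_2)\otimes h_3$; $[h]$ denotes the class of $h$. *)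

theory Defs
  imports Main "HOL.Vector_Spaces"
begin

text \<open>Elements of H\<otimes>H (resp. H\<otimes>H\<otimes>H) are represented by finite formal sums,
  i.e. lists of pairs (triples).  Two representations denote the same tensor iff
  every k-bilinear (trilinear) form takes the same value on them.\<close>

definition sum2 :: "('h \<times> 'h) list \<Rightarrow> ('h \<Rightarrow> 'h \<Rightarrow> 'v::comm_monoid_add) \<Rightarrow> 'v" where
  "sum2 t f = sum_list (map (\<lambda>(a,b). f a b) t)"

definition sum3 :: "('h \<times> 'h \<times> 'h) list \<Rightarrow> ('h \<Rightarrow> 'h \<Rightarrow> 'h \<Rightarrow> 'v::comm_monoid_add) \<Rightarrow> 'v" where
  "sum3 t f = sum_list (map (\<lambda>(a,b,c). f a b c) t)"

definition bilin :: "('k::field \<Rightarrow> 'h::ab_group_add \<Rightarrow> 'h) \<Rightarrow> ('h \<Rightarrow> 'h \<Rightarrow> 'k) \<Rightarrow> bool" where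
  "bilin s f \<longleftrightarrow> (\<forall>b. Vector_Spaces.linear s (*) (\<lambda>a. f a b)) \<and> (\<forall>a. Vector_Spaces.linear s (*) (f a))"

definition trilin :: "('k::field \<Rightarrow> 'h::ab_group_add \<Rightarrow> 'h) \<Rightarrow> ('h \<Rightarrow> 'h \<Rightarrow> 'h \<Rightarrow> 'k) \<Rightarrow> bool" where
  "trilin s f \<longleftrightarrow> (\<forall>b c. Vector_Spaces.linear s (*) (\<lambda>a. f a b c))
      \<and> (\<forall>a c. Vector_Spaces.linear s (*) (\<lambda>b. f a b c))
      \<and> (\<forall>a b. Vector_Spaces.linear s (*) (f a b))"

definition teq2 :: "('k::field \<Rightarrow> 'h::ab_group_add \<Rightarrow> 'h) \<Rightarrow> ('h \<times> 'h) list \<Rightarrow> ('h \<times> 'h) list \<Rightarrow> bool" where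
  "teq2 s t u \<longleftrightarrow> (\<forall>f. bilin s f \<longrightarrow> sum2 t f = sum2 u f)"

definition teq3 :: "('k::field \<Rightarrow> 'h::ab_group_add \<Rightarrow> 'h) \<Rightarrow> ('h \<times> 'h \<times> 'h) list \<Rightarrow> ('h \<times> 'h \<times> 'h) list \<Rightarrow> bool" where
  "teq3 s t u \<longleftrightarrow> (\<forall>f. trilin s f \<longrightarrow> sum3 t f = sum3 u f)"

definition tmul2 :: "('h::times \<times> 'h) list \<Rightarrow> ('h \<times> 'h) list \<Rightarrow> ('h \<times> 'h) list" where
  "tmul2 t u = concat (map (\<lambda>(a,b). map (\<lambda>(c,d). (a*c, b*d)) u) t)"

definition cop2 :: "('h \<Rightarrow> ('h \<times> 'h) list) \<Rightarrow> 'h \<Rightarrow> ('h \<times> 'h \<times> 'h) list" where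
  "cop2 cop h = concat (map (\<lambda>(a,b). map (\<lambda>(c,d). (a,c,d)) (cop b)) (cop h))"

definition cop2L :: "('h \<Rightarrow> ('h \<times> 'h) list) \<Rightarrow> 'h \<Rightarrow> ('h \<times> 'h \<times> 'h) list" where
  "cop2L cop h = concat (map (\<lambda>(a,b). map (\<lambda>(c,d). (c,d,b)) (cop a)) (cop h))"

text \<open>Associative unital algebra over the field k (the zero algebra is allowed).\<close>
definition k_algebra :: "('k::field \<Rightarrow> 'h::{ring,monoid_mult} \<Rightarrow> 'h) \<Rightarrow> bool" where
  "k_algebra s \<longleftrightarrow> Vector_Spaces.vector_space s \<and>
     (\<forall>c x y. s c (x * y) = s c x * y \<and> s c (x * y) = x * s c y)"

definition weak_hopf_algebra ::
  "('k::field \<Rightarrow> 'h::{ring,monoid_mult} \<Rightarrow> 'h) \<Rightarrow> ('h \<Rightarrow> ('h \<times> 'h) list) \<Rightarrow> ('h \<Rightarrow> 'k) \<Rightarrow> ('h \<Rightarrow> 'h) \<Rightarrow> bool" where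
  "weak_hopf_algebra s cop eps S \<longleftrightarrow>
     k_algebra s
   \<comment> \<open>\<Delta> is linear\<close>
   \<and> (\<forall>x y. teq2 s (cop (x + y)) (cop x @ cop y))
   \<and> (\<forall>c x. teq2 s (cop (s c x)) (map (\<lambda>(a,b). (s c a, b)) (cop x)))
   \<and> Vector_Spaces.linear s (*) eps
   \<and> Vector_Spaces.linear s s S
   \<comment> \<open>coalgebra: coassociativity and counit\<close>
   \<and> (\<forall>h. teq3 s (cop2L cop h) (cop2 cop h))
   \<and> (\<forall>h. sum2 (cop h) (\<lambda>a b. s (eps a) b) = h)
   \<and> (\<forall>h. sum2 (cop h) (\<lambda>a b. s (eps b) a) = h)
   \<comment> \<open>\<Delta>(kh) = \<Delta>(k)\<Delta>(h)\<close>
   \<and> (\<forall>k h. teq2 s (cop (k * h)) (tmul2 (cop k) (cop h)))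
   \<comment> \<open>weak multiplicativity of the counit\<close>
   \<and> (\<forall>k h g. sum2 (cop h) (\<lambda>a b. eps (k * a) * eps (b * g)) = eps (k * h * g))
   \<and> (\<forall>k h g. sum2 (cop h) (\<lambda>a b. eps (k * b) * eps (a * g)) = eps (k * h * g))
   \<comment> \<open>weak comultiplicativity of the unit\<close>
   \<and> teq3 s (concat (map (\<lambda>(c,d). map (\<lambda>(a,b). (a, c * b, d)) (cop 1)) (cop 1))) (cop2 cop 1)
   \<and> teq3 s (concat (map (\<lambda>(a,b). map (\<lambda>(c,d). (a, b * c, d)) (cop 1)) (cop 1))) (cop2 cop 1)
   \<comment> \<open>antipode axioms\<close>
   \<and> (\<forall>h. sum2 (cop h) (\<lambda>a b. a * S b) = sum2 (cop 1) (\<lambda>a b. s (eps (a * h)) b))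
   \<and> (\<forall>h. sum2 (cop h) (\<lambda>a b. S a * b) = sum2 (cop 1) (\<lambda>a b. s (eps (h * b)) a))
   \<and> (\<forall>h. S h = sum3 (cop2 cop h) (\<lambda>a b c. S a * b * S c))"

text \<open>A k-algebra A with a linear map \<pi> : H \<rightarrow> A satisfying the defining relations
  of H_par^w (i.e. \<pi> factors through the canonical map H \<rightarrow> H_par^w, h \<mapsto> [h]).\<close>
definition par_rep ::
  "('k::field \<Rightarrow> 'h::{ring,monoid_mult} \<Rightarrow> 'h) \<Rightarrow> ('h \<Rightarrow> ('h \<times> 'h) list) \<Rightarrow> ('h \<Rightarrow> 'h)
   \<Rightarrow> ('k \<Rightarrow> 'a::{ring,monoid_mult} \<Rightarrow> 'a) \<Rightarrow> ('h \<Rightarrow> 'a) \<Rightarrow> bool" where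
  "par_rep s cop S sA p \<longleftrightarrow>
     k_algebra sA \<and> Vector_Spaces.linear s sA p
   \<and> p 1 = 1
   \<and> (\<forall>h k. sum2 (cop k) (\<lambda>a b. p h * p a * p (S b)) = sum2 (cop k) (\<lambda>a b. p (h * a) * p (S b)))
   \<and> (\<forall>h k. sum2 (cop k) (\<lambda>a b. p h * p (S a) * p b) = sum2 (cop k) (\<lambda>a b. p (h * S a) * p b))
   \<and> (\<forall>h k. sum2 (cop h) (\<lambda>a b. p a * p (S b) * p k) = sum2 (cop h) (\<lambda>a b. p a * p (S b * k)))
   \<and> (\<forall>h k. sum2 (cop h) (\<lambda>a b. p (S a) * p b * p k) = sum2 (cop h) (\<lambda>a b. p (S a) * p (b * k)))
   \<and> (\<forall>h. p h = sum3 (cop2 cop h) (\<lambda>a b c. p a * p (S b) * p c))"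

definition Epar :: "('h \<Rightarrow> ('h \<times> 'h) list) \<Rightarrow> ('h \<Rightarrow> 'h) \<Rightarrow> ('h \<Rightarrow> 'a::{ring,monoid_mult}) \<Rightarrow> 'h \<Rightarrow> 'a" where
  "Epar cop S p h = sum2 (cop h) (\<lambda>a b. p a * p (S b))"

definition Etpar :: "('h \<Rightarrow> ('h \<times> 'h) list) \<Rightarrow> ('h \<Rightarrow> 'h) \<Rightarrow> ('h \<Rightarrow> 'a::{ring,monoid_mult}) \<Rightarrow> 'h \<Rightarrow> 'a" where
  "Etpar cop S p h = sum2 (cop h) (\<lambda>a b. p (S a) * p b)"

definition cocommutative :: "('k::field \<Rightarrow> 'h::ab_group_add \<Rightarrow> 'h) \<Rightarrow> ('h \<Rightarrow> ('h \<times> 'h) list) \<Rightarrow> bool" where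
  "cocommutative s cop \<longleftrightarrow> (\<forall>h. teq2 s (cop h) (map (\<lambda>(a,b). (b,a)) (cop h)))"

end

theory Submission
  imports Defs
begin

lemma vs_k: "Vector_Spaces.vector_space ((*)::'k::field \<Rightarrow> 'k \<Rightarrow> 'k)"
  by unfold_locales (simp_all add: algebra_simps)

lemma linear_sum_list:
  assumes "Vector_Spaces.linear s1 s2 g"
  shows "g (sum_list xs) = sum_list (map g xs)"
proof -
  interpret linear s1 s2 g by fact
  show ?thesis by (induction xs) (simp_all add: add)
qed

lemma sep:
  assumes vs: "Vector_Spaces.vector_space sV" and v: "v \<noteq> 0"
  shows "\<exists>g. Vector_Spaces.linear sV (*) g \<and> g v \<noteq> 0"
proof -
  interpret vector_space sV by fact
  obtain B where B: "independent B" "UNIV \<subseteq> span B"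
    using maximal_independent_subset[of UNIV] by blast
  have sp: "span B = UNIV" using B by auto
  have "\<exists>b. representation B v b \<noteq> 0"
  proof (rule ccontr)
    assume "\<not> ?thesis"
    then have "{b. representation B v b \<noteq> 0} = {}" by auto
    with sum_nonzero_representation_eq[OF B(1), of v] sp have "v = 0" by simp
    with v show False by simp
  qed
  then obtain b where "representation B v b \<noteq> 0" by blast
  moreover have "Vector_Spaces.linear sV (*) (\<lambda>w. representation B w b)"
    using linear_representation[OF B(1) sp] .
  ultimately show ?thesis by blast
qed

lemma sum2_lin: "Vector_Spaces.linear s1 s2 g \<Longrightarrow> g (sum2 t f) = sum2 t (\<lambda>a b. g (f a b))"
proof -
  assume g: "Vector_Spaces.linear s1 s2 g"
  interpret linear s1 s2 g by fact
  show ?thesis by (induct t) (auto simp: sum2_def add)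
qed

lemma sum3_lin: "Vector_Spaces.linear s1 s2 g \<Longrightarrow> g (sum3 t f) = sum3 t (\<lambda>a b c. g (f a b c))"
proof -
  assume g: "Vector_Spaces.linear s1 s2 g"
  interpret linear s1 s2 g by fact
  show ?thesis by (induct t) (auto simp: sum3_def add)
qed

definition bil :: "('k::field \<Rightarrow> 'h::ab_group_add \<Rightarrow> 'h) \<Rightarrow> ('k \<Rightarrow> 'v::ab_group_add \<Rightarrow> 'v) \<Rightarrow> ('h \<Rightarrow> 'h \<Rightarrow> 'v) \<Rightarrow> bool" where
  "bil s sV f \<longleftrightarrow> (\<forall>b. Vector_Spaces.linear s sV (\<lambda>a. f a b)) \<and> (\<forall>a. Vector_Spaces.linear s sV (\<lambda>b. f a b))"

definition tri :: "('k::field \<Rightarrow> 'h::ab_group_add \<Rightarrow> 'h) \<Rightarrow> ('k \<Rightarrow> 'v::ab_group_add \<Rightarrow> 'v) \<Rightarrow> ('h \<Rightarrow> 'h \<Rightarrow> 'h \<Rightarrow> 'v) \<Rightarrow> bool" where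
  "tri s sV f \<longleftrightarrow> (\<forall>b c. Vector_Spaces.linear s sV (\<lambda>a. f a b c)) \<and> (\<forall>a c. Vector_Spaces.linear s sV (\<lambda>b. f a b c))
     \<and> (\<forall>a b. Vector_Spaces.linear s sV (\<lambda>c. f a b c))"

lemma bilI: "(\<And>b. Vector_Spaces.linear s sV (\<lambda>a. f a b)) \<Longrightarrow> (\<And>a. Vector_Spaces.linear s sV (\<lambda>b. f a b)) \<Longrightarrow> bil s sV f"
  by (simp add: bil_def)

lemma triI: "(\<And>b c. Vector_Spaces.linear s sV (\<lambda>a. f a b c)) \<Longrightarrow> (\<And>a c. Vector_Spaces.linear s sV (\<lambda>b. f a b c))
   \<Longrightarrow> (\<And>a b. Vector_Spaces.linear s sV (\<lambda>c. f a b c)) \<Longrightarrow> tri s sV f"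
  by (simp add: tri_def)

lemma lin_vs2: "Vector_Spaces.linear s sV g \<Longrightarrow> Vector_Spaces.vector_space sV"
  by (simp add: Vector_Spaces.linear_def)

lemma lin_vs1: "Vector_Spaces.linear s sV g \<Longrightarrow> Vector_Spaces.vector_space s"
  by (simp add: Vector_Spaces.linear_def)

lemma teq2_transfer:
  assumes t: "teq2 s t u" and f: "bil s sV f"
  shows "sum2 t f = sum2 u f"
proof (rule ccontr)
  assume ne: "sum2 t f \<noteq> sum2 u f"
  have l1: "Vector_Spaces.linear s sV (\<lambda>a. f a 0)" using f by (simp add: bil_def)
  have vs: "Vector_Spaces.vector_space sV" using lin_vs2[OF l1] .
  then interpret V: vector_space sV .
  from ne have "sum2 t f - sum2 u f \<noteq> 0" by simp
  from sep[OF vs this] obtain g where g: "Vector_Spaces.linear sV (*) g" "g (sum2 t f - sum2 u f) \<noteq> 0" by blast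
  interpret G: linear sV "(*)" g by fact
  have "bilin s (\<lambda>a b. g (f a b))"
    unfolding bilin_def
  proof (intro conjI allI)
    fix b show "Vector_Spaces.linear s (*) (\<lambda>a. g (f a b))"
      using Vector_Spaces.linear_compose[OF _ g(1), of s "\<lambda>a. f a b"] f by (simp add: bil_def o_def)
  next
    fix a show "Vector_Spaces.linear s (*) (\<lambda>b. g (f a b))"
      using Vector_Spaces.linear_compose[OF _ g(1), of s "\<lambda>b. f a b"] f by (simp add: bil_def o_def)
  qed
  with t have eq: "sum2 t (\<lambda>a b. g (f a b)) = sum2 u (\<lambda>a b. g (f a b))" by (simp add: teq2_def)
  have "\<And>t. g (sum2 t f) = sum2 t (\<lambda>a b. g (f a b))"
    by (rule sum2_lin[OF g(1)])
  with eq have "g (sum2 t f) = g (sum2 u f)" by simp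
  with g(2) show False by (simp add: G.diff)
qed

lemma teq3_transfer:
  assumes t: "teq3 s t u" and f: "tri s sV f"
  shows "sum3 t f = sum3 u f"
proof (rule ccontr)
  assume ne: "sum3 t f \<noteq> sum3 u f"
  have l1: "Vector_Spaces.linear s sV (\<lambda>a. f a 0 0)" using f by (simp add: tri_def)
  have vs: "Vector_Spaces.vector_space sV" using lin_vs2[OF l1] .
  then interpret V: vector_space sV .
  from ne have "sum3 t f - sum3 u f \<noteq> 0" by simp
  from sep[OF vs this] obtain g where g: "Vector_Spaces.linear sV (*) g" "g (sum3 t f - sum3 u f) \<noteq> 0" by blast
  interpret G: linear sV "(*)" g by fact
  have "trilin s (\<lambda>a b c. g (f a b c))"
    unfolding trilin_def
  proof (intro conjI allI)
    fix b c show "Vector_Spaces.linear s (*) (\<lambda>a. g (f a b c))"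
      using Vector_Spaces.linear_compose[OF _ g(1), of s "\<lambda>a. f a b c"] f by (simp add: tri_def o_def)
  next
    fix a c show "Vector_Spaces.linear s (*) (\<lambda>b. g (f a b c))"
      using Vector_Spaces.linear_compose[OF _ g(1), of s "\<lambda>b. f a b c"] f by (simp add: tri_def o_def)
  next
    fix a b show "Vector_Spaces.linear s (*) (\<lambda>c. g (f a b c))"
      using Vector_Spaces.linear_compose[OF _ g(1), of s "\<lambda>c. f a b c"] f by (simp add: tri_def o_def)
  qed
  with t have eq: "sum3 t (\<lambda>a b c. g (f a b c)) = sum3 u (\<lambda>a b c. g (f a b c))" by (simp add: teq3_def)
  have "\<And>t. g (sum3 t f) = sum3 t (\<lambda>a b c. g (f a b c))"
    by (rule sum3_lin[OF g(1)])
  with eq have "g (sum3 t f) = g (sum3 u f)" by simp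
  with g(2) show False by (simp add: G.diff)
qed

lemma L_add: assumes "Vector_Spaces.linear s sV F" "Vector_Spaces.linear s sV G"
  shows "Vector_Spaces.linear s sV (\<lambda>x. F x + G x)"
proof -
  interpret F: linear s sV F by fact
  interpret G: linear s sV G by fact
  show ?thesis unfolding Vector_Spaces.linear_iff
    by (simp add: F.add G.add F.scale G.scale F.vs2.scale_right_distrib F.vs1.vector_space_axioms F.vs2.vector_space_axioms algebra_simps)
qed

lemma L_scale: assumes "Vector_Spaces.linear s sV F"
  shows "Vector_Spaces.linear s sV (\<lambda>x. sV c (F x))"
proof -
  interpret F: linear s sV F by fact
  show ?thesis unfolding Vector_Spaces.linear_iff
    by (simp add: F.add F.scale F.vs2.scale_right_distrib F.vs1.vector_space_axioms F.vs2.vector_space_axioms mult.commute)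
qed

lemma L_scalek: assumes "Vector_Spaces.linear s (*) \<phi>" "Vector_Spaces.vector_space sV"
  shows "Vector_Spaces.linear s sV (\<lambda>x. sV (\<phi> x) v)"
proof -
  interpret F: linear s "(*)" \<phi> by fact
  interpret V: vector_space sV by fact
  show ?thesis unfolding Vector_Spaces.linear_iff
    by (simp add: F.add F.scale V.scale_left_distrib F.vs1.vector_space_axioms V.vector_space_axioms)
qed

lemma L_mulLk: "Vector_Spaces.linear s (*) \<phi> \<Longrightarrow> Vector_Spaces.linear s (*) (\<lambda>x. c * \<phi> x)"
  unfolding Vector_Spaces.linear_iff by (auto simp: algebra_simps)

lemma L_mulRk: "Vector_Spaces.linear s (*) \<phi> \<Longrightarrow> Vector_Spaces.linear s (*) (\<lambda>x. \<phi> x * c)"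
  unfolding Vector_Spaces.linear_iff by (auto simp: algebra_simps)

lemma L_mulL: assumes A: "k_algebra sA" and F: "Vector_Spaces.linear s sA F"
  shows "Vector_Spaces.linear s sA (\<lambda>x. c * F x)"
proof -
  interpret F: linear s sA F by fact
  have m: "\<And>r x. sA r (c * x) = c * sA r x" using A unfolding k_algebra_def by blast
  show ?thesis unfolding Vector_Spaces.linear_iff
    by (simp add: F.add F.scale m distrib_left F.vs1.vector_space_axioms F.vs2.vector_space_axioms)
qed

lemma L_mulR: assumes A: "k_algebra sA" and F: "Vector_Spaces.linear s sA F"
  shows "Vector_Spaces.linear s sA (\<lambda>x. F x * c)"
proof -
  interpret F: linear s sA F by fact
  have m: "\<And>r x. sA r (x * c) = sA r x * c" using A unfolding k_algebra_def by blast
  show ?thesis unfolding Vector_Spaces.linear_iff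
    by (simp add: F.add F.scale m distrib_right F.vs1.vector_space_axioms F.vs2.vector_space_axioms)
qed

lemma L_id: "Vector_Spaces.vector_space s \<Longrightarrow> Vector_Spaces.linear s s (\<lambda>x. x)"
  unfolding Vector_Spaces.linear_iff by auto

lemma L_comp: "Vector_Spaces.linear s s G \<Longrightarrow> Vector_Spaces.linear s sV g \<Longrightarrow> Vector_Spaces.linear s sV (\<lambda>x. g (G x))"
  using Vector_Spaces.linear_compose[of s s G sV g] by (simp add: o_def)

lemma L_sum2: "Vector_Spaces.vector_space s \<Longrightarrow> Vector_Spaces.vector_space sV \<Longrightarrow> (\<And>a b. Vector_Spaces.linear s sV (\<lambda>x. F x a b)) \<Longrightarrow>
   Vector_Spaces.linear s sV (\<lambda>x. sum2 t (\<lambda>a b. F x a b))"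
proof (induct t)
  case Nil then show ?case by (simp add: sum2_def Vector_Spaces.linear_iff module.scale_zero_right[OF Nil(2)[unfolded module_iff_vector_space[symmetric]]])
next
  case (Cons ab t)
  have "Vector_Spaces.linear s sV (\<lambda>x. F x (fst ab) (snd ab) + sum2 t (\<lambda>a b. F x a b))"
    using Cons by (intro L_add) auto
  then show ?case by (simp add: sum2_def split_def)
qed

lemma L_sum3: "Vector_Spaces.vector_space s \<Longrightarrow> Vector_Spaces.vector_space sV \<Longrightarrow> (\<And>a b c. Vector_Spaces.linear s sV (\<lambda>x. F x a b c)) \<Longrightarrow>
   Vector_Spaces.linear s sV (\<lambda>x. sum3 t (\<lambda>a b c. F x a b c))"
proof (induct t)
  case Nil then show ?case by (simp add: sum3_def Vector_Spaces.linear_iff module.scale_zero_right[OF Nil(2)[unfolded module_iff_vector_space[symmetric]]])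
next
  case (Cons ab t)
  have "Vector_Spaces.linear s sV (\<lambda>x. F x (fst ab) (fst (snd ab)) (snd (snd ab)) + sum3 t (\<lambda>a b c. F x a b c))"
    using Cons by (intro L_add) auto
  then show ?case by (simp add: sum3_def split_def)
qed

lemma sum2_swap: "sum2 t (\<lambda>a b. sum2 u (\<lambda>c d. F a b c d)) = sum2 u (\<lambda>c d. sum2 t (\<lambda>a b. F a b c d))"
  unfolding sum2_def
  by (induct t) (simp_all add: split_def sum_list_addf)

lemma sum2_add: "sum2 t (\<lambda>a b. F a b + G a b) = sum2 t F + sum2 t G"
  unfolding sum2_def by (induct t) (auto simp: split_def algebra_simps)

lemma sum2_append: "sum2 (t @ u) f = sum2 t f + sum2 u f"
  unfolding sum2_def by simp

lemma sum2_cong: "(\<And>a b. F a b = G a b) \<Longrightarrow> sum2 t F = sum2 t G"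
  by (simp add: sum2_def)

lemma sum2_map: "sum2 (map (\<lambda>(a,b). (g a b, h a b)) t) f = sum2 t (\<lambda>a b. f (g a b) (h a b))"
  unfolding sum2_def by (induct t) (auto simp: split_def)

lemma sum3_nest: "sum3 (concat (map (\<lambda>(a,b). map (\<lambda>(c,d). (a,c,d)) (g b)) t)) f = sum2 t (\<lambda>a b. sum2 (g b) (\<lambda>c d. f a c d))"
  unfolding sum3_def sum2_def by (induct t) (auto simp: split_def o_def)

lemma sum3_nestL: "sum3 (concat (map (\<lambda>(a,b). map (\<lambda>(c,d). (c,d,b)) (g a)) t)) f = sum2 t (\<lambda>a b. sum2 (g a) (\<lambda>c d. f c d b))"
  unfolding sum3_def sum2_def by (induct t) (auto simp: split_def o_def)

lemma sum3_unit1: "sum3 (concat (map (\<lambda>(c,d). map (\<lambda>(a,b). (a, c * b, d)) u) t)) f = sum2 t (\<lambda>c d. sum2 u (\<lambda>a b. f a (c*b) d))"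
  unfolding sum3_def sum2_def by (induct t) (auto simp: split_def o_def)

lemma sum3_unit2: "sum3 (concat (map (\<lambda>(a,b). map (\<lambda>(c,d). (a, b * c, d)) u) t)) f = sum2 t (\<lambda>a b. sum2 u (\<lambda>c d. f a (b*c) d))"
  unfolding sum3_def sum2_def by (induct t) (auto simp: split_def o_def)

lemma sum2_tmul: "sum2 (tmul2 t u) f = sum2 t (\<lambda>a b. sum2 u (\<lambda>c d. f (a*c) (b*d)))"
  unfolding tmul2_def sum2_def by (induct t) (auto simp: split_def o_def)

locale WH =
  fixes s :: "'k::field \<Rightarrow> 'h::{ring,monoid_mult} \<Rightarrow> 'h" and cop :: "'h \<Rightarrow> ('h \<times> 'h) list"
    and eps :: "'h \<Rightarrow> 'k" and S :: "'h \<Rightarrow> 'h"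
  assumes wha: "weak_hopf_algebra s cop eps S"
begin

abbreviation D where "D h f \<equiv> sum2 (cop h) f"

lemma kalg: "k_algebra s" using wha unfolding weak_hopf_algebra_def by blast
lemma vsH: "Vector_Spaces.vector_space s" using kalg by (simp add: k_algebra_def)
lemma smul1: "s c (x * y) = s c x * y" using kalg by (simp add: k_algebra_def)
lemma smul2: "s c (x * y) = x * s c y" using kalg unfolding k_algebra_def by blast
lemma cop_add: "teq2 s (cop (x + y)) (cop x @ cop y)" using wha unfolding weak_hopf_algebra_def by blast
lemma cop_scale: "teq2 s (cop (s c x)) (map (\<lambda>(a,b). (s c a, b)) (cop x))" using wha unfolding weak_hopf_algebra_def by blast
lemma lin_eps: "Vector_Spaces.linear s (*) eps" using wha unfolding weak_hopf_algebra_def by blast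
lemma lin_S: "Vector_Spaces.linear s s S" using wha unfolding weak_hopf_algebra_def by blast
lemma coass: "teq3 s (cop2L cop h) (cop2 cop h)" using wha unfolding weak_hopf_algebra_def by blast
lemma cu1: "sum2 (cop h) (\<lambda>a b. s (eps a) b) = h" using wha unfolding weak_hopf_algebra_def by blast
lemma cu2: "sum2 (cop h) (\<lambda>a b. s (eps b) a) = h" using wha unfolding weak_hopf_algebra_def by blast
lemma cmul: "teq2 s (cop (k * h)) (tmul2 (cop k) (cop h))" using wha unfolding weak_hopf_algebra_def by blast
lemma EM1: "D h (\<lambda>a b. eps (k * a) * eps (b * g)) = eps (k * h * g)" using wha unfolding weak_hopf_algebra_def by blast
lemma EM2: "D h (\<lambda>a b. eps (k * b) * eps (a * g)) = eps (k * h * g)" using wha unfolding weak_hopf_algebra_def by blast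
lemma un1: "teq3 s (concat (map (\<lambda>(c,d). map (\<lambda>(a,b). (a, c * b, d)) (cop 1)) (cop 1))) (cop2 cop 1)"
  using wha unfolding weak_hopf_algebra_def by blast
lemma un2: "teq3 s (concat (map (\<lambda>(a,b). map (\<lambda>(c,d). (a, b * c, d)) (cop 1)) (cop 1))) (cop2 cop 1)"
  using wha unfolding weak_hopf_algebra_def by blast
lemma ANT1: "D h (\<lambda>a b. a * S b) = D 1 (\<lambda>a b. s (eps (a * h)) b)" using wha unfolding weak_hopf_algebra_def by blast
lemma ANT2: "D h (\<lambda>a b. S a * b) = D 1 (\<lambda>a b. s (eps (h * b)) a)" using wha unfolding weak_hopf_algebra_def by blast
lemma ANT3': "S h = sum3 (cop2 cop h) (\<lambda>a b c. S a * b * S c)" using wha unfolding weak_hopf_algebra_def by blast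
lemma D3: "sum3 (cop2 cop h) f = D h (\<lambda>a b. D b (\<lambda>c d. f a c d))"
  unfolding cop2_def by (rule sum3_nest)
lemma D3L: "sum3 (cop2L cop h) f = D h (\<lambda>a b. D a (\<lambda>c d. f c d b))"
  unfolding cop2L_def by (rule sum3_nestL)

lemma ANT3: "S h = D h (\<lambda>a b. D b (\<lambda>c d. S a * c * S d))"
  using ANT3'[of h] by (simp only: D3)

lemma bil_vs: "bil s sV f \<Longrightarrow> Vector_Spaces.vector_space sV"
  unfolding bil_def using lin_vs2 by blast
lemma tri_vs: "tri s sV f \<Longrightarrow> Vector_Spaces.vector_space sV"
  unfolding tri_def using lin_vs2 by blast

lemma L_idh: "Vector_Spaces.linear s s (\<lambda>x. x)" by (rule L_id[OF vsH])
lemma L_Sh: "Vector_Spaces.linear s s G \<Longrightarrow> Vector_Spaces.linear s s (\<lambda>x. S (G x))"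
  by (rule L_comp[OF _ lin_S])
lemma L_epsh: "Vector_Spaces.linear s s G \<Longrightarrow> Vector_Spaces.linear s (*) (\<lambda>x. eps (G x))"
  by (rule L_comp[OF _ lin_eps])
lemma L_mulLh: "Vector_Spaces.linear s s G \<Longrightarrow> Vector_Spaces.linear s s (\<lambda>x. c * G x)"
  by (rule L_mulL[OF kalg])
lemma L_mulRh: "Vector_Spaces.linear s s G \<Longrightarrow> Vector_Spaces.linear s s (\<lambda>x. G x * c)"
  by (rule L_mulR[OF kalg])

lemma D_add: "bil s sV f \<Longrightarrow> D (x + y) f = D x f + D y f"
  using teq2_transfer[OF cop_add] by (simp add: sum2_append)

lemma D_scale: assumes f: "bil s sV f" shows "D (s c x) f = sV c (D x f)"
proof -
  have l: "\<And>b. Vector_Spaces.linear s sV (\<lambda>a. f a b)" using f by (simp add: bil_def)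
  interpret V: vector_space sV using bil_vs[OF f] .
  have "D (s c x) f = sum2 (cop x) (\<lambda>a b. f (s c a) b)"
    using teq2_transfer[OF cop_scale f] by (simp add: sum2_map)
  also have "\<dots> = sum2 (cop x) (\<lambda>a b. sV c (f a b))"
    using l by (simp add: linear_iff)
  also have "\<dots> = sV c (D x f)"
    using sum2_lin[OF V.linear_scale_self[of c], of "cop x" f] by simp
  finally show ?thesis .
qed

lemma L_D: assumes G: "Vector_Spaces.linear s s G" and f: "bil s sV f"
  shows "Vector_Spaces.linear s sV (\<lambda>x. D (G x) f)"
proof -
  interpret G: linear s s G by fact
  show ?thesis unfolding Vector_Spaces.linear_iff
    using bil_vs[OF f] vsH by (simp add: G.add G.scale D_add[OF f] D_scale[OF f])
qed

lemma L_D3: assumes G: "Vector_Spaces.linear s s G" and f: "tri s sV f"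
  shows "Vector_Spaces.linear s sV (\<lambda>x. sum3 (cop2 cop (G x)) f)"
proof -
  have vs: "Vector_Spaces.vector_space sV" using tri_vs[OF f] .
  have "bil s sV (\<lambda>a b. D b (\<lambda>c d. f a c d))"
  proof (rule bilI)
    fix b show "Vector_Spaces.linear s sV (\<lambda>a. D b (\<lambda>c d. f a c d))"
      using f unfolding tri_def by (intro L_sum2[OF vsH vs]) blast
  next
    fix a show "Vector_Spaces.linear s sV (\<lambda>b. D b (\<lambda>c d. f a c d))"
      using f unfolding tri_def by (intro L_D[OF L_idh] bilI) blast+
  qed
  then have "Vector_Spaces.linear s sV (\<lambda>x. D (G x) (\<lambda>a b. D b (\<lambda>c d. f a c d)))"
    by (rule L_D[OF G])
  then show ?thesis by (simp only: D3)
qed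

lemmas linI = L_idh L_Sh L_epsh L_mulLh L_mulRh L_D L_D3 L_add L_scale L_scalek L_mulLk L_mulRk L_sum2 L_sum3 vsH vs_k bilI triI

lemma CA: assumes "tri s sV f"
  shows "D h (\<lambda>a b. D a (\<lambda>c d. f c d b)) = D h (\<lambda>a b. D b (\<lambda>c d. f a c d))"
  using teq3_transfer[OF coass assms] by (simp only: D3 D3L)

lemma MUL: assumes "bil s sV f"
  shows "D (k * h) f = D k (\<lambda>a b. D h (\<lambda>c d. f (a*c) (b*d)))"
  using teq2_transfer[OF cmul assms] by (simp add: sum2_tmul)

lemma UN1: assumes "tri s sV f"
  shows "D 1 (\<lambda>c d. D 1 (\<lambda>a b. f a (c*b) d)) = D 1 (\<lambda>a b. D b (\<lambda>c d. f a c d))"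
  using teq3_transfer[OF un1 assms] by (simp only: D3 sum3_unit1)

lemma UN2: assumes "tri s sV f"
  shows "D 1 (\<lambda>a b. D 1 (\<lambda>c d. f a (b*c) d)) = D 1 (\<lambda>a b. D b (\<lambda>c d. f a c d))"
  using teq3_transfer[OF un2 assms] by (simp only: D3 sum3_unit2)

lemma CU1: assumes g: "Vector_Spaces.linear s sV g"
  shows "D h (\<lambda>a b. sV (eps a) (g b)) = g h"
proof -
  interpret linear s sV g by fact
  have "g h = g (D h (\<lambda>a b. s (eps a) b))" by (simp add: cu1)
  also have "\<dots> = D h (\<lambda>a b. sV (eps a) (g b))" by (simp add: sum2_lin[OF g] scale)
  finally show ?thesis by simp
qed

lemma CU2: assumes g: "Vector_Spaces.linear s sV g"
  shows "D h (\<lambda>a b. sV (eps b) (g a)) = g h"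
proof -
  interpret linear s sV g by fact
  have "g h = g (D h (\<lambda>a b. s (eps b) a))" by (simp add: cu2)
  also have "\<dots> = D h (\<lambda>a b. sV (eps b) (g a))" by (simp add: sum2_lin[OF g] scale)
  finally show ?thesis by simp
qed

lemma ML1: assumes "bil s sV f" shows "D h f = D 1 (\<lambda>a b. D h (\<lambda>c d. f (a*c) (b*d)))"
  using MUL[OF assms, of 1 h] by simp

lemma MR1: assumes "bil s sV f" shows "D h f = D h (\<lambda>a b. D 1 (\<lambda>c d. f (a*c) (b*d)))"
  using MUL[OF assms, of h 1] by simp

lemma B1: "bil s sV f \<Longrightarrow> Vector_Spaces.linear s s G \<Longrightarrow> Vector_Spaces.linear s sV (\<lambda>x. f (G x) b)"
  unfolding bil_def using L_comp[where G=G and g="\<lambda>a. f a b"] by auto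
lemma B2: "bil s sV f \<Longrightarrow> Vector_Spaces.linear s s G \<Longrightarrow> Vector_Spaces.linear s sV (\<lambda>x. f a (G x))"
  unfolding bil_def using L_comp[where G=G and g="\<lambda>b. f a b"] by auto

definition et where "et y = D 1 (\<lambda>a b. s (eps (a * y)) b)"
definition es where "es y = D 1 (\<lambda>a b. s (eps (y * b)) a)"

lemma etD: "et h = D h (\<lambda>a b. a * S b)" by (simp add: ANT1 et_def)
lemma esD: "es h = D h (\<lambda>a b. S a * b)" by (simp add: ANT2 es_def)

lemma L_et: "Vector_Spaces.linear s s G \<Longrightarrow> Vector_Spaces.linear s s (\<lambda>x. et (G x))"
  unfolding et_def by (intro linI)
lemma L_es: "Vector_Spaces.linear s s G \<Longrightarrow> Vector_Spaces.linear s s (\<lambda>x. es (G x))"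
  unfolding es_def by (intro linI)

lemmas linJ = linI L_et L_es

lemma sum2_mult_left: "(c::'z::ring) * sum2 t F = sum2 t (\<lambda>a b. c * F a b)"
  unfolding sum2_def by (induct t) (auto simp: split_def distrib_left)
lemma sum2_mult_right: "sum2 t F * (c::'z::ring) = sum2 t (\<lambda>a b. F a b * c)"
  unfolding sum2_def by (induct t) (auto simp: split_def distrib_right)
lemma sum2_zero: "sum2 t (\<lambda>a b. 0) = 0"
  unfolding sum2_def by (induct t) auto

lemma lin_sum: "Vector_Spaces.linear s1 s2 g \<Longrightarrow> g (sum2 t F) = sum2 t (\<lambda>a b. g (F a b))"
  by (rule sum2_lin)
lemma lin_scale: "Vector_Spaces.linear s1 s2 g \<Longrightarrow> g (s1 c x) = s2 c (g x)"
  unfolding Vector_Spaces.linear_iff by blast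

lemma bil_sum1: "bil s sV f \<Longrightarrow> f (sum2 t G) b = sum2 t (\<lambda>c d. f (G c d) b)"
  unfolding bil_def using lin_sum[of s sV "\<lambda>a. f a b"] by blast
lemma bil_sum2: "bil s sV f \<Longrightarrow> f a (sum2 t G) = sum2 t (\<lambda>c d. f a (G c d))"
  unfolding bil_def using lin_sum[of s sV "\<lambda>b. f a b"] by blast
lemma bil_sc1: "bil s sV f \<Longrightarrow> f (s c x) b = sV c (f x b)"
  unfolding bil_def using lin_scale[of s sV "\<lambda>a. f a b"] by blast
lemma bil_sc2: "bil s sV f \<Longrightarrow> f a (s c x) = sV c (f a x)"
  unfolding bil_def using lin_scale[of s sV "\<lambda>b. f a b"] by blast

lemma eps_sum: "eps (sum2 t G) = sum2 t (\<lambda>c d. eps (G c d))" by (rule lin_sum[OF lin_eps])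
lemma eps_sc: "eps (s c x) = c * eps x" using lin_scale[OF lin_eps] by simp
lemma S_sum: "S (sum2 t G) = sum2 t (\<lambda>c d. S (G c d))" by (rule lin_sum[OF lin_S])
lemma S_sc: "S (s c x) = s c (S x)" using lin_scale[OF lin_S] by simp
lemma sc_sum: "Vector_Spaces.vector_space sV \<Longrightarrow> sV c (sum2 t G) = sum2 t (\<lambda>a b. sV c (G a b))"
  by (rule lin_sum[OF vector_space.linear_scale_self])
lemma sc_sc: assumes "Vector_Spaces.vector_space sV" shows "sV c (sV d x) = sV (c * d) x"
proof -
  interpret vector_space sV by fact
  show ?thesis by simp
qed

lemma D_zero: assumes "bil s sV f" shows "D 0 f = 0"
proof -
  interpret V: vector_space sV using bil_vs[OF assms] .
  interpret H: vector_space s using vsH .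
  have "D (s 0 0) f = sV 0 (D 0 f)" by (rule D_scale[OF assms])
  then show ?thesis by simp
qed

lemma D_sum: assumes f: "bil s sV f" shows "D (sum2 t G) f = sum2 t (\<lambda>a b. D (G a b) f)"
  unfolding sum2_def[of t] by (induct t) (auto simp: D_zero[OF f] D_add[OF f] split_def)

lemma ANT4: "S h = D h (\<lambda>a b. S a * et b)"
  by (simp add: ANT3[of h] etD sum2_mult_left mult.assoc)

lemma ANT5: "S h = D h (\<lambda>a b. es a * S b)"
proof -
  have "S h = D h (\<lambda>a b. D b (\<lambda>c d. S a * c * S d))" by (rule ANT3)
  also have "\<dots> = D h (\<lambda>a b. D a (\<lambda>c d. S c * d * S b))"
    by (rule CA[where sV=s, symmetric]) (intro linJ)
  also have "\<dots> = D h (\<lambda>a b. es a * S b)"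
    by (simp add: esD sum2_mult_right)
  finally show ?thesis .
qed


end

context WH begin

lemma W1: assumes f: "bil s sV f"
  shows "D x (\<lambda>a b. f a (et b)) = D 1 (\<lambda>a b. f (a*x) b)"
proof -
  have vs: "Vector_Spaces.vector_space sV" by (rule bil_vs[OF f])
  note lf = B1[OF f] B2[OF f] vs
  have "D 1 (\<lambda>a b. f (a*x) b) = D 1 (\<lambda>a b. D (a*x) (\<lambda>c d. sV (eps d) (f c b)))"
    by (rule sum2_cong, rule CU2[where sV=sV, symmetric]) (intro linJ lf)
  also have "\<dots> = D 1 (\<lambda>a b. D a (\<lambda>a' b'. D x (\<lambda>c d. sV (eps (b'*d)) (f (a'*c) b))))"
    by (rule sum2_cong, rule MUL[where sV=sV]) (intro linJ lf)
  also have "\<dots> = D 1 (\<lambda>a b. D b (\<lambda>c d. D x (\<lambda>u v. sV (eps (c*v)) (f (a*u) d))))"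
    by (rule CA[where sV=sV]) (intro linJ lf)
  also have "\<dots> = D 1 (\<lambda>c d. D 1 (\<lambda>a b. D x (\<lambda>u v. sV (eps (c*b*v)) (f (a*u) d))))"
    by (rule UN1[where sV=sV, symmetric]) (intro linJ lf)
  also have "\<dots> = D 1 (\<lambda>c d. D x (\<lambda>u v. sV (eps (c*v)) (f u d)))"
    by (rule sum2_cong, subst ML1[where sV=sV and h=x], (intro linJ lf), simp add: mult.assoc)
  also have "\<dots> = D x (\<lambda>u v. D 1 (\<lambda>c d. sV (eps (c*v)) (f u d)))"
    by (rule sum2_swap)
  also have "\<dots> = D x (\<lambda>u v. f u (et v))"
    unfolding et_def
    by (rule sum2_cong) (simp add: bil_sum2[OF f] bil_sc2[OF f])
  finally show ?thesis by simp
qed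

lemma W2: assumes f: "bil s sV f"
  shows "D x (\<lambda>a b. f (es a) b) = D 1 (\<lambda>a b. f a (x*b))"
proof -
  have vs: "Vector_Spaces.vector_space sV" by (rule bil_vs[OF f])
  note lf = B1[OF f] B2[OF f] vs
  have "D 1 (\<lambda>a b. f a (x*b)) = D 1 (\<lambda>a b. D (x*b) (\<lambda>c d. sV (eps c) (f a d)))"
    by (rule sum2_cong, rule CU1[where sV=sV, symmetric]) (intro linJ lf)
  also have "\<dots> = D 1 (\<lambda>a b. D x (\<lambda>u v. D b (\<lambda>c d. sV (eps (u*c)) (f a (v*d)))))"
    by (rule sum2_cong, rule MUL[where sV=sV]) (intro linJ lf)
  also have "\<dots> = D x (\<lambda>u v. D 1 (\<lambda>a b. D b (\<lambda>c d. sV (eps (u*c)) (f a (v*d)))))"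
    by (rule sum2_swap)
  also have "\<dots> = D x (\<lambda>u v. D 1 (\<lambda>c d. D 1 (\<lambda>a b. sV (eps (u*(c*b))) (f a (v*d)))))"
    by (rule sum2_cong, rule UN1[where sV=sV, symmetric]) (intro linJ lf)
  also have "\<dots> = D x (\<lambda>u v. D 1 (\<lambda>a b. sV (eps (u*b)) (f a v)))"
    apply (subst MR1[where sV=sV and f="\<lambda>U V. D 1 (\<lambda>a b. sV (eps (U*b)) (f a V))"])
     apply (intro linJ lf)
    apply (simp add: mult.assoc)
    done
  also have "\<dots> = D x (\<lambda>u v. f (es u) v)"
    unfolding es_def by (simp add: bil_sum1[OF f] bil_sc1[OF f])
  finally show ?thesis by simp
qed

lemma DET_L: assumes f: "bil s sV f"
  shows "D (et y) f = D 1 (\<lambda>a b. f (a * et y) b)"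
proof -
  have vs: "Vector_Spaces.vector_space sV" by (rule bil_vs[OF f])
  note lf = B1[OF f] B2[OF f] vs
  have "D (et y) f = D 1 (\<lambda>a b. D b (\<lambda>c d. sV (eps (a*y)) (f c d)))"
    unfolding et_def by (simp add: D_sum[OF f] D_scale[OF f] sc_sum[OF vs])
  also have "\<dots> = D 1 (\<lambda>c d. D 1 (\<lambda>a b. sV (eps (a*y)) (f (c*b) d)))"
    by (rule UN1[where sV=sV, symmetric]) (intro linJ lf)
  also have "\<dots> = D 1 (\<lambda>a b. f (a * et y) b)"
    unfolding et_def by (simp add: bil_sum1[OF f] bil_sc1[OF f] sum2_mult_left smul2[symmetric])
  finally show ?thesis .
qed

lemma DET_R: assumes f: "bil s sV f"
  shows "D (et y) f = D 1 (\<lambda>a b. f (et y * a) b)"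
proof -
  have vs: "Vector_Spaces.vector_space sV" by (rule bil_vs[OF f])
  note lf = B1[OF f] B2[OF f] vs
  have "D (et y) f = D 1 (\<lambda>a b. D b (\<lambda>c d. sV (eps (a*y)) (f c d)))"
    unfolding et_def by (simp add: D_sum[OF f] D_scale[OF f] sc_sum[OF vs])
  also have "\<dots> = D 1 (\<lambda>a b. D 1 (\<lambda>c d. sV (eps (a*y)) (f (b*c) d)))"
    by (rule UN2[where sV=sV, symmetric]) (intro linJ lf)
  also have "\<dots> = D 1 (\<lambda>c d. D 1 (\<lambda>a b. sV (eps (a*y)) (f (b*c) d)))"
    by (rule sum2_swap)
  also have "\<dots> = D 1 (\<lambda>a b. f (et y * a) b)"
    unfolding et_def by (simp add: bil_sum1[OF f] bil_sc1[OF f] sum2_mult_right smul1[symmetric])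
  finally show ?thesis .
qed

lemma DES_R: assumes f: "bil s sV f"
  shows "D (es y) f = D 1 (\<lambda>a b. f a (es y * b))"
proof -
  have vs: "Vector_Spaces.vector_space sV" by (rule bil_vs[OF f])
  note lf = B1[OF f] B2[OF f] vs
  have "D (es y) f = D 1 (\<lambda>a b. D a (\<lambda>c d. sV (eps (y*b)) (f c d)))"
    unfolding es_def by (simp add: D_sum[OF f] D_scale[OF f] sc_sum[OF vs])
  also have "\<dots> = D 1 (\<lambda>a b. D b (\<lambda>c d. sV (eps (y*d)) (f a c)))"
    by (rule CA[where sV=sV]) (intro linJ lf)
  also have "\<dots> = D 1 (\<lambda>c d. D 1 (\<lambda>a b. sV (eps (y*d)) (f a (c*b))))"
    by (rule UN1[where sV=sV, symmetric]) (intro linJ lf)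
  also have "\<dots> = D 1 (\<lambda>a b. D 1 (\<lambda>c d. sV (eps (y*d)) (f a (c*b))))"
    by (rule sum2_swap)
  also have "\<dots> = D 1 (\<lambda>a b. f a (es y * b))"
    unfolding es_def by (simp add: bil_sum2[OF f] bil_sc2[OF f] sum2_mult_right smul1[symmetric])
  finally show ?thesis .
qed

lemma DES_L: assumes f: "bil s sV f"
  shows "D (es y) f = D 1 (\<lambda>a b. f a (b * es y))"
proof -
  have vs: "Vector_Spaces.vector_space sV" by (rule bil_vs[OF f])
  note lf = B1[OF f] B2[OF f] vs
  have "D (es y) f = D 1 (\<lambda>a b. D a (\<lambda>c d. sV (eps (y*b)) (f c d)))"
    unfolding es_def by (simp add: D_sum[OF f] D_scale[OF f] sc_sum[OF vs])
  also have "\<dots> = D 1 (\<lambda>a b. D b (\<lambda>c d. sV (eps (y*d)) (f a c)))"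
    by (rule CA[where sV=sV]) (intro linJ lf)
  also have "\<dots> = D 1 (\<lambda>a b. D 1 (\<lambda>c d. sV (eps (y*d)) (f a (b*c))))"
    by (rule UN2[where sV=sV, symmetric]) (intro linJ lf)
  also have "\<dots> = D 1 (\<lambda>a b. f a (b * es y))"
    unfolding es_def by (simp add: bil_sum2[OF f] bil_sc2[OF f] sum2_mult_left smul2[symmetric])
  finally show ?thesis .
qed

lemma L1: "et (x * et y) = et (x * y)"
proof -
  have "\<And>a. eps (a * (x * et y)) = eps (a * (x * y))"
  proof -
    fix a
    have "eps (a * (x * et y)) = D 1 (\<lambda>c d. eps (a * x * d) * eps (c * y))"
      unfolding et_def by (simp add: sum2_mult_left smul2[symmetric] eps_sum eps_sc mult.assoc mult.commute)
    also have "\<dots> = eps (a * x * 1 * y)" by (rule EM2)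
    finally show "eps (a * (x * et y)) = eps (a * (x * y))" by (simp add: mult.assoc)
  qed
  then show ?thesis unfolding et_def[of "x * et y"] et_def[of "x*y"] by simp
qed

lemma L3: "es (es x * y) = es (x * y)"
proof -
  have "\<And>b. eps (es x * y * b) = eps (x * y * b)"
  proof -
    fix b
    have "eps (es x * y * b) = D 1 (\<lambda>c d. eps (x * d) * eps (c * (y * b)))"
      unfolding es_def by (simp add: sum2_mult_right smul1[symmetric] eps_sum eps_sc mult.assoc mult.commute)
    also have "\<dots> = eps (x * 1 * (y * b))" by (rule EM2)
    finally show "eps (es x * y * b) = eps (x * y * b)" by (simp add: mult.assoc)
  qed
  then show ?thesis unfolding es_def[of "es x * y"] es_def[of "x*y"] by simp
qed

lemma COMM: "es a * et b = et b * es a"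
proof -
  let ?F = "\<lambda>l1 m l3. s (eps (l1*b) * eps (a*l3)) m"
  have tri: "tri s s ?F"
    by (intro triI L_scalek L_mulLk L_mulRk L_epsh L_mulLh L_mulRh L_idh L_scale vsH)
  have "es a * et b = D 1 (\<lambda>c d. D 1 (\<lambda>a' b'. ?F a' (c*b') d))"
    unfolding es_def et_def
    by (simp only: sum2_mult_right) (simp add: sum2_mult_left smul1[symmetric] smul2[symmetric] sc_sc[OF vsH] mult.commute)
  also have "\<dots> = D 1 (\<lambda>a' b'. D 1 (\<lambda>c d. ?F a' (b'*c) d))"
    using UN1[OF tri] UN2[OF tri] by simp
  also have "\<dots> = et b * es a"
    unfolding es_def et_def
    by (simp only: sum2_mult_right) (simp add: sum2_mult_left smul1[symmetric] smul2[symmetric] sc_sc[OF vsH] mult.commute)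
  finally show ?thesis .
qed

lemma DXET: assumes f: "bil s sV f"
  shows "D (x * et y) f = D x (\<lambda>a b. f (a * et y) b)"
proof -
  have vs: "Vector_Spaces.vector_space sV" by (rule bil_vs[OF f])
  note lf = B1[OF f] B2[OF f] vs
  have "D (x * et y) f = D x (\<lambda>a b. D (et y) (\<lambda>c d. f (a*c) (b*d)))"
    by (rule MUL[where sV=sV]) (rule f)
  also have "\<dots> = D x (\<lambda>a b. D 1 (\<lambda>c d. f (a*(c * et y)) (b*d)))"
    by (rule sum2_cong, rule DET_L[where sV=sV]) (intro linJ lf)
  also have "\<dots> = D x (\<lambda>a b. f (a * et y) b)"
    apply (subst MR1[where sV=sV and f="\<lambda>U V. f (U * et y) V"])
     apply (intro linJ lf)
    apply (simp add: mult.assoc)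
    done
  finally show ?thesis .
qed

lemma DESY: assumes f: "bil s sV f"
  shows "D (es x * y) f = D y (\<lambda>a b. f a (es x * b))"
proof -
  have vs: "Vector_Spaces.vector_space sV" by (rule bil_vs[OF f])
  note lf = B1[OF f] B2[OF f] vs
  have "D (es x * y) f = D (es x) (\<lambda>a b. D y (\<lambda>c d. f (a*c) (b*d)))"
    by (rule MUL[where sV=sV]) (rule f)
  also have "\<dots> = D 1 (\<lambda>a b. D y (\<lambda>c d. f (a*c) (es x * b * d)))"
    by (rule DES_R[where sV=sV]) (intro linJ lf)
  also have "\<dots> = D y (\<lambda>a b. f a (es x * b))"
    apply (subst ML1[where sV=sV and f="\<lambda>U V. f U (es x * V)"])
     apply (intro linJ lf)
    apply (simp add: mult.assoc)
    done
  finally show ?thesis .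
qed

lemma L4: "es (x * y) = D y (\<lambda>c d. S c * (es x * d))"
proof -
  have "es (x * y) = es (es x * y)" by (simp add: L3)
  also have "\<dots> = D (es x * y) (\<lambda>a b. S a * b)" by (simp add: ANT2 es_def)
  also have "\<dots> = D y (\<lambda>c d. S c * (es x * d))" by (rule DESY[where sV=s]) (intro linJ)
  finally show ?thesis .
qed


lemma SM: "S (x * y) = S y * S x"
proof -
  have "S (x * y) = D (x*y) (\<lambda>a b. S a * et b)" by (rule ANT4)
  also have "\<dots> = D x (\<lambda>a b. D y (\<lambda>c d. S (a*c) * et (b*d)))"
    by (rule MUL[where sV=s]) (intro linJ)
  also have "\<dots> = D x (\<lambda>a b. D y (\<lambda>c d. S (a*c) * D (b * et d) (\<lambda>u v. u * S v)))"
    by (simp only: L1 etD[symmetric])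
  also have "\<dots> = D x (\<lambda>a b. D y (\<lambda>c d. S (a*c) * D b (\<lambda>u v. u * et d * S v)))"
    by (intro sum2_cong arg_cong2[where f="(*)"] refl DXET[where sV=s]) (intro linJ)
  also have "\<dots> = D x (\<lambda>a b. D b (\<lambda>u v. D y (\<lambda>c d. D d (\<lambda>u' v'. S (a*c) * (u * (u' * (S v' * S v)))))))"
    by (simp add: etD[of "_::'h"] sum2_mult_left sum2_mult_right mult.assoc sum2_swap[of "cop y"])
  also have "\<dots> = D x (\<lambda>a1 v. D a1 (\<lambda>a u. D y (\<lambda>c d. D d (\<lambda>u' v'. S (a*c) * (u * (u' * (S v' * S v)))))))"
    by (rule CA[where sV=s, symmetric]) (intro linJ)
  also have "\<dots> = D x (\<lambda>a1 v. D a1 (\<lambda>a u. D y (\<lambda>c1 v'. D c1 (\<lambda>c u'. S (a*c) * (u * (u' * (S v' * S v)))))))"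
    by (intro sum2_cong CA[where sV=s, symmetric]) (intro linJ)
  also have "\<dots> = D x (\<lambda>a1 v. D y (\<lambda>c1 v'. D a1 (\<lambda>a u. D c1 (\<lambda>c u'. S (a*c) * (u * u') * (S v' * S v)))))"
    by (simp add: sum2_swap[of "cop y"] mult.assoc)
  also have "\<dots> = D x (\<lambda>a1 v. D y (\<lambda>c1 v'. D (a1*c1) (\<lambda>p q. S p * q) * (S v' * S v)))"
    by (intro sum2_cong) (simp add: MUL[where sV=s] sum2_mult_right bilI linJ)
  also have "\<dots> = D x (\<lambda>a1 v. D y (\<lambda>c1 v'. D c1 (\<lambda>c u. S c * (es a1 * u)) * (S v' * S v)))"
    by (simp only: esD[symmetric] L4)
  also have "\<dots> = D x (\<lambda>a1 v. D y (\<lambda>c1 v'. D c1 (\<lambda>c u. S c * (es a1 * (u * (S v' * S v))))))"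
    by (simp add: sum2_mult_right mult.assoc)
  also have "\<dots> = D x (\<lambda>a1 v. D y (\<lambda>c w. D w (\<lambda>u v'. S c * (es a1 * (u * (S v' * S v))))))"
    by (intro sum2_cong CA[where sV=s]) (intro linJ)
  also have "\<dots> = D x (\<lambda>a1 v. D y (\<lambda>c w. S c * (es a1 * (et w * S v))))"
    by (simp add: etD[of "_::'h"] sum2_mult_left sum2_mult_right mult.assoc)
  also have "\<dots> = D x (\<lambda>a1 v. D y (\<lambda>c w. (S c * et w) * (es a1 * S v)))"
    by (simp add: COMM mult.assoc flip: mult.assoc[of "es _" "et _"])
  also have "\<dots> = S y * S x"
    by (simp add: ANT4[of y] ANT5[of x] sum2_mult_left sum2_mult_right sum2_swap[of "cop y"])
  finally show ?thesis .
qed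

lemma scl_sum: assumes "Vector_Spaces.vector_space sV" shows "sV (sum2 t F) v = sum2 t (\<lambda>a b. sV (F a b) v)"
proof -
  interpret vector_space sV by fact
  show ?thesis unfolding sum2_def by (induct t) (auto simp: split_def scale_left_distrib)
qed

lemma et1: "et 1 = 1"
  unfolding et_def using CU1[OF L_idh, of 1] by simp
lemma es1: "es 1 = 1"
  unfolding es_def using CU2[OF L_idh, of 1] by simp
lemma S1: "S 1 = 1"
proof -
  have "S 1 = D 1 (\<lambda>a b. S a * et b)" by (rule ANT4)
  also have "\<dots> = D 1 (\<lambda>a b. S (a*1) * b)" by (rule W1[where sV=s]) (intro linJ)
  also have "\<dots> = es 1" by (simp add: esD)
  finally show ?thesis by (simp add: es1)
qed

lemma V1: assumes f: "bil s sV f"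
  shows "D 1 (\<lambda>a b. f a (S b)) = D 1 (\<lambda>a b. f a (es b))"
proof -
  have vs: "Vector_Spaces.vector_space sV" by (rule bil_vs[OF f])
  note lf = B1[OF f] B2[OF f] vs
  have "D 1 (\<lambda>a b. f a (S b)) = D 1 (\<lambda>a b. f a (S b * es 1))"
    by (simp add: es1)
  also have "\<dots> = D 1 (\<lambda>a b. D 1 (\<lambda>c d. f a (S b * (S c * d))))"
    by (simp only: esD[of 1] sum2_mult_left bil_sum2[OF f])
  also have "\<dots> = D 1 (\<lambda>c d. D 1 (\<lambda>a b. f a (S (c*b) * d)))"
    by (subst sum2_swap) (simp add: SM mult.assoc)
  also have "\<dots> = D 1 (\<lambda>a b. D b (\<lambda>c d. f a (S c * d)))"
    by (rule UN1[where sV=sV]) (intro linJ lf)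
  also have "\<dots> = D 1 (\<lambda>a b. f a (es b))"
    by (simp add: esD bil_sum2[OF f])
  finally show ?thesis .
qed

lemma V2: assumes f: "bil s sV f"
  shows "D 1 (\<lambda>a b. f (S a) b) = D 1 (\<lambda>a b. f (et a) b)"
proof -
  have vs: "Vector_Spaces.vector_space sV" by (rule bil_vs[OF f])
  note lf = B1[OF f] B2[OF f] vs
  have "D 1 (\<lambda>a b. f (S a) b) = D 1 (\<lambda>a b. f (et 1 * S a) b)"
    by (simp add: et1)
  also have "\<dots> = D 1 (\<lambda>a b. D 1 (\<lambda>c d. f (c * S (a * d)) b))"
    by (simp only: etD[of 1] sum2_mult_right bil_sum1[OF f]) (simp add: SM mult.assoc)
  also have "\<dots> = D 1 (\<lambda>x y. D y (\<lambda>u v. f (x * S u) v))"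
    by (rule UN1[where sV=sV]) (intro linJ lf)
  also have "\<dots> = D 1 (\<lambda>p v. D p (\<lambda>x u. f (x * S u) v))"
    by (rule CA[where sV=sV, symmetric]) (intro linJ lf)
  also have "\<dots> = D 1 (\<lambda>a b. f (et a) b)"
    by (simp add: etD bil_sum1[OF f])
  finally show ?thesis .
qed

lemma V3: "D 1 (\<lambda>a b. s (eps (y*a)) (S b)) = es y"
proof -
  have "D 1 (\<lambda>a b. s (eps (y*a)) (S b)) = D 1 (\<lambda>a b. s (eps (y*a)) (es b))"
    by (rule V1[where sV=s]) (intro linJ)
  also have "\<dots> = D 1 (\<lambda>c d. s (D 1 (\<lambda>a b. eps (y*a) * eps (b*d))) c)"
    unfolding es_def by (simp add: sc_sum[OF vsH] sc_sc[OF vsH] scl_sum[OF vsH]; rule sum2_swap)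
  also have "\<dots> = es y"
    unfolding es_def by (simp add: EM1)
  finally show ?thesis .
qed

lemma V4: "D 1 (\<lambda>a b. s (eps (b*y)) (S a)) = et y"
proof -
  have "D 1 (\<lambda>a b. s (eps (b*y)) (S a)) = D 1 (\<lambda>a b. s (eps (b*y)) (et a))"
    by (rule V2[where sV=s]) (intro linJ)
  also have "\<dots> = D 1 (\<lambda>a b. D 1 (\<lambda>c d. s (eps (c*a) * eps (b*y)) d))"
  proof (rule sum2_cong)
    fix a b show "s (eps (b*y)) (et a) = D 1 (\<lambda>c d. s (eps (c*a) * eps (b*y)) d)"
      unfolding et_def by (simp add: sc_sum[OF vsH] sc_sc[OF vsH] mult.commute)
  qed
  also have "\<dots> = D 1 (\<lambda>c d. D 1 (\<lambda>a b. s (eps (c*a) * eps (b*y)) d))"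
    by (rule sum2_swap)
  also have "\<dots> = D 1 (\<lambda>c d. s (D 1 (\<lambda>a b. eps (c*a) * eps (b*y))) d)"
    by (simp add: scl_sum[OF vsH])
  also have "\<dots> = et y"
    unfolding et_def by (simp add: EM1)
  finally show ?thesis .
qed

lemma W6a: assumes f: "bil s sV f"
  shows "D 1 (\<lambda>a b. f (x*a) b) = D x (\<lambda>u v. D 1 (\<lambda>a b. f u (s (eps (v*a)) b)))"
proof -
  have vs: "Vector_Spaces.vector_space sV" by (rule bil_vs[OF f])
  note lf = B1[OF f] B2[OF f] vs
  have "D 1 (\<lambda>a b. f (x*a) b) = D 1 (\<lambda>a b. D (x*a) (\<lambda>c d. sV (eps d) (f c b)))"
    by (rule sum2_cong, rule CU2[where sV=sV, symmetric]) (intro linJ lf)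
  also have "\<dots> = D 1 (\<lambda>a b. D x (\<lambda>u v. D a (\<lambda>c d. sV (eps (v*d)) (f (u*c) b))))"
    by (rule sum2_cong, rule MUL[where sV=sV]) (intro linJ lf)
  also have "\<dots> = D x (\<lambda>u v. D 1 (\<lambda>a b. D a (\<lambda>c d. sV (eps (v*d)) (f (u*c) b))))"
    by (rule sum2_swap)
  also have "\<dots> = D x (\<lambda>u v. D 1 (\<lambda>a b. D b (\<lambda>c d. sV (eps (v*c)) (f (u*a) d))))"
    by (rule sum2_cong, rule CA[where sV=sV]) (intro linJ lf)
  also have "\<dots> = D x (\<lambda>u v. D 1 (\<lambda>a b. D 1 (\<lambda>c d. sV (eps (v*(b*c))) (f (u*a) d))))"
    by (rule sum2_cong, rule UN2[where sV=sV, symmetric]) (intro linJ lf)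
  also have "\<dots> = D x (\<lambda>u v. D 1 (\<lambda>c d. sV (eps (v*c)) (f u d)))"
    apply (subst MR1[where sV=sV and f="\<lambda>U V. D 1 (\<lambda>c d. sV (eps (V*c)) (f U d))"])
     apply (intro linJ lf)
    apply (simp add: mult.assoc)
    done
  also have "\<dots> = D x (\<lambda>u v. D 1 (\<lambda>a b. f u (s (eps (v*a)) b)))"
    by (simp add: bil_sc2[OF f])
  finally show ?thesis .
qed

lemma W6: assumes f: "bil s sV f"
  shows "D x (\<lambda>a b. f a (es b)) = D 1 (\<lambda>a b. f (x*a) (S b))"
proof -
  have vs: "Vector_Spaces.vector_space sV" by (rule bil_vs[OF f])
  note lf = B1[OF f] B2[OF f] vs
  have "D 1 (\<lambda>a b. f (x*a) (S b)) = D x (\<lambda>u v. D 1 (\<lambda>a b. f u (S (s (eps (v*a)) b))))"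
    by (rule W6a[where sV=sV]) (intro linJ lf)
  also have "\<dots> = D x (\<lambda>u v. f u (D 1 (\<lambda>a b. s (eps (v*a)) (S b))))"
    by (simp add: S_sc bil_sum2[OF f])
  also have "\<dots> = D x (\<lambda>a b. f a (es b))" by (simp add: V3)
  finally show ?thesis by simp
qed

lemma W7a: assumes f: "bil s sV f"
  shows "D 1 (\<lambda>a b. f a (b*x)) = D x (\<lambda>u v. D 1 (\<lambda>a b. f (s (eps (b*u)) a) v))"
proof -
  have vs: "Vector_Spaces.vector_space sV" by (rule bil_vs[OF f])
  note lf = B1[OF f] B2[OF f] vs
  have "D 1 (\<lambda>a b. f a (b*x)) = D 1 (\<lambda>a b. D (b*x) (\<lambda>c d. sV (eps c) (f a d)))"
    by (rule sum2_cong, rule CU1[where sV=sV, symmetric]) (intro linJ lf)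
  also have "\<dots> = D 1 (\<lambda>a b. D b (\<lambda>c d. D x (\<lambda>u v. sV (eps (c*u)) (f a (d*v)))))"
    by (rule sum2_cong, rule MUL[where sV=sV]) (intro linJ lf)
  also have "\<dots> = D 1 (\<lambda>a b. D 1 (\<lambda>c d. D x (\<lambda>u v. sV (eps (b*c*u)) (f a (d*v)))))"
    by (rule UN2[where sV=sV, symmetric]) (intro linJ lf)
  also have "\<dots> = D 1 (\<lambda>a b. D x (\<lambda>u v. sV (eps (b*u)) (f a v)))"
    apply (rule sum2_cong)
    apply (subst ML1[where sV=sV and f="\<lambda>U V. sV (eps (b*U)) (f a V)" for b a])
     apply (intro linJ lf)
    apply (simp add: mult.assoc)
    done
  also have "\<dots> = D x (\<lambda>u v. D 1 (\<lambda>a b. f (s (eps (b*u)) a) v))"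
    by (simp add: bil_sc1[OF f] sum2_swap[of "cop 1"])
  finally show ?thesis .
qed

lemma W7: assumes f: "bil s sV f"
  shows "D x (\<lambda>a b. f (et a) b) = D 1 (\<lambda>a b. f (S a) (b*x))"
proof -
  have vs: "Vector_Spaces.vector_space sV" by (rule bil_vs[OF f])
  note lf = B1[OF f] B2[OF f] vs
  have "D 1 (\<lambda>a b. f (S a) (b*x)) = D x (\<lambda>u v. D 1 (\<lambda>a b. f (S (s (eps (b*u)) a)) v))"
    by (rule W7a[where sV=sV]) (intro linJ lf)
  also have "\<dots> = D x (\<lambda>u v. f (D 1 (\<lambda>a b. s (eps (b*u)) (S a))) v)"
    by (simp add: S_sc bil_sum1[OF f])
  also have "\<dots> = D x (\<lambda>a b. f (et a) b)" by (simp add: V4)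
  finally show ?thesis by simp
qed

lemma Uflip: assumes f: "bil s sV f"
  shows "D 1 (\<lambda>a b. f (S a) (S b)) = D 1 (\<lambda>a b. f b a)"
proof -
  have vs: "Vector_Spaces.vector_space sV" by (rule bil_vs[OF f])
  note lf = B1[OF f] B2[OF f] vs
  have "D 1 (\<lambda>a b. f (S a) (S b)) = D 1 (\<lambda>a b. f (S a) (es b))"
    by (rule V1[where sV=sV]) (intro linJ lf)
  also have "\<dots> = D 1 (\<lambda>a b. f (et a) (es b))"
    by (rule V2[where sV=sV]) (intro linJ lf)
  also have "\<dots> = D 1 (\<lambda>a b. D 1 (\<lambda>c d. D 1 (\<lambda>a' b'. sV (eps (b*d) * eps (a'*a)) (f b' c))))"
    unfolding et_def es_def
    by (simp add: bil_sum1[OF f] bil_sum2[OF f] bil_sc1[OF f] bil_sc2[OF f] sc_sum[OF vs] sc_sc[OF vs])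
  also have "\<dots> = D 1 (\<lambda>c d. D 1 (\<lambda>a b. D 1 (\<lambda>a' b'. sV (eps (b*d) * eps (a'*a)) (f b' c))))"
    by (rule sum2_swap)
  also have "\<dots> = D 1 (\<lambda>c d. D 1 (\<lambda>a' b'. D 1 (\<lambda>a b. sV (eps (b*d) * eps (a'*a)) (f b' c))))"
    by (rule sum2_cong, rule sum2_swap)
  also have "\<dots> = D 1 (\<lambda>c d. D 1 (\<lambda>a' b'. sV (eps (a'*d)) (f b' c)))"
  proof (intro sum2_cong)
    fix c d a' b'
    have e: "D 1 (\<lambda>a b. eps (b*d) * eps (a'*a)) = eps (a'*d)"
      using EM1[of 1 a' d] by (simp add: mult.commute)
    show "D 1 (\<lambda>a b. sV (eps (b*d) * eps (a'*a)) (f b' c)) = sV (eps (a'*d)) (f b' c)"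
      by (simp add: scl_sum[OF vs, symmetric] e)
  qed
  also have "\<dots> = D 1 (\<lambda>c d. f (et d) c)"
    unfolding et_def by (simp add: bil_sum1[OF f] bil_sc1[OF f])
  also have "\<dots> = D 1 (\<lambda>a b. f b (a*1))"
    by (rule W1[where sV=sV and f="\<lambda>a b. f b a"]) (intro linJ lf)
  finally show ?thesis by simp
qed

lemma U: assumes f: "bil s sV f"
  shows "D 1 (\<lambda>a b. f (S b) (S a)) = D 1 f"
proof -
  have vs: "Vector_Spaces.vector_space sV" by (rule bil_vs[OF f])
  note lf = B1[OF f] B2[OF f] vs
  have "bil s sV (\<lambda>a b. f b a)" by (intro bilI lf L_idh)
  then show ?thesis using Uflip[where sV=sV and f="\<lambda>a b. f b a"] by simp
qed

end

locale PR = WH s cop eps S for s :: "'k::field \<Rightarrow> 'h::{ring,monoid_mult} \<Rightarrow> 'h" and cop eps S +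
  fixes sA :: "'k \<Rightarrow> 'a::{ring,monoid_mult} \<Rightarrow> 'a" and p :: "'h \<Rightarrow> 'a"
  assumes par: "par_rep s cop S sA p"
begin

abbreviation "E \<equiv> Epar cop S p"
abbreviation "Et \<equiv> Etpar cop S p"

lemmas parD = par[unfolded par_rep_def]
lemma kalgA: "k_algebra sA" using parD by (rule conjunct1)
lemma vsA: "Vector_Spaces.vector_space sA" using kalgA unfolding k_algebra_def by (rule conjunct1)
lemma lin_p: "Vector_Spaces.linear s sA p" using parD[THEN conjunct2] by (rule conjunct1)
lemma p1: "p 1 = 1" using parD[THEN conjunct2, THEN conjunct2] by (rule conjunct1)
lemma R1: "D k (\<lambda>a b. p h * p a * p (S b)) = D k (\<lambda>a b. p (h * a) * p (S b))"
  by (rule parD[THEN conjunct2, THEN conjunct2, THEN conjunct2, THEN conjunct1, rule_format])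
lemma R2: "D k (\<lambda>a b. p h * p (S a) * p b) = D k (\<lambda>a b. p (h * S a) * p b)"
  by (rule parD[THEN conjunct2, THEN conjunct2, THEN conjunct2, THEN conjunct2, THEN conjunct1, rule_format])
lemma R3: "D h (\<lambda>a b. p a * p (S b) * p k) = D h (\<lambda>a b. p a * p (S b * k))"
  by (rule parD[THEN conjunct2, THEN conjunct2, THEN conjunct2, THEN conjunct2, THEN conjunct2, THEN conjunct1, rule_format])
lemma R4: "D h (\<lambda>a b. p (S a) * p b * p k) = D h (\<lambda>a b. p (S a) * p (b * k))"
  by (rule parD[THEN conjunct2, THEN conjunct2, THEN conjunct2, THEN conjunct2, THEN conjunct2, THEN conjunct2, THEN conjunct1, rule_format])
lemma R5': "p h = sum3 (cop2 cop h) (\<lambda>a b c. p a * p (S b) * p c)"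
  by (rule parD[THEN conjunct2, THEN conjunct2, THEN conjunct2, THEN conjunct2, THEN conjunct2, THEN conjunct2, THEN conjunct2, rule_format])
lemma R5: "p h = D h (\<lambda>a b. D b (\<lambda>c d. p a * p (S c) * p d))"
  unfolding D3[symmetric] by (rule R5')

lemma Edef: "E h = D h (\<lambda>a b. p a * p (S b))" by (simp add: Epar_def)
lemma Etdef: "Et h = D h (\<lambda>a b. p (S a) * p b)" by (simp add: Etpar_def)

lemma R1E: "p h * E k = D k (\<lambda>a b. p (h * a) * p (S b))"
  using R1 by (simp add: Edef sum2_mult_left mult.assoc)
lemma R2E: "p h * Et k = D k (\<lambda>a b. p (h * S a) * p b)"
  using R2 by (simp add: Etdef sum2_mult_left mult.assoc)
lemma R3E: "E h * p k = D h (\<lambda>a b. p a * p (S b * k))"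
  using R3 by (simp add: Edef sum2_mult_right mult.assoc)
lemma R4E: "Et h * p k = D h (\<lambda>a b. p (S a) * p (b * k))"
  using R4 by (simp add: Etdef sum2_mult_right mult.assoc)

lemma p_sum: "p (sum2 t G) = sum2 t (\<lambda>c d. p (G c d))" by (rule lin_sum[OF lin_p])
lemma p_sc: "p (s c x) = sA c (p x)" using lin_scale[OF lin_p] by simp
lemma smulA1: "sA c (x * y) = sA c x * y" using kalgA by (simp add: k_algebra_def)
lemma smulA2: "sA c (x * y) = x * sA c y" using kalgA unfolding k_algebra_def by blast

lemma L_p: "Vector_Spaces.linear s s G \<Longrightarrow> Vector_Spaces.linear s sA (\<lambda>x. p (G x))"
  by (rule L_comp[OF _ lin_p])
lemma L_mulLA: "Vector_Spaces.linear s sA G \<Longrightarrow> Vector_Spaces.linear s sA (\<lambda>x. c * G x)"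
  by (rule L_mulL[OF kalgA])
lemma L_mulRA: "Vector_Spaces.linear s sA G \<Longrightarrow> Vector_Spaces.linear s sA (\<lambda>x. G x * c)"
  by (rule L_mulR[OF kalgA])

lemma L_E: "Vector_Spaces.linear s s G \<Longrightarrow> Vector_Spaces.linear s sA (\<lambda>x. E (G x))"
  unfolding Edef by (intro linJ L_p L_mulLA L_mulRA vsA)
lemma L_Et: "Vector_Spaces.linear s s G \<Longrightarrow> Vector_Spaces.linear s sA (\<lambda>x. Et (G x))"
  unfolding Etdef by (intro linJ L_p L_mulLA L_mulRA vsA)

lemmas linK = linJ L_p L_mulLA L_mulRA L_E L_Et vsA

lemma E_sum: "E (sum2 t G) = sum2 t (\<lambda>c d. E (G c d))" by (rule lin_sum[OF L_E[OF L_idh]])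
lemma Et_sum: "Et (sum2 t G) = sum2 t (\<lambda>c d. Et (G c d))" by (rule lin_sum[OF L_Et[OF L_idh]])

lemma E1: "E 1 = 1"
proof -
  have "1 = p 1" by (simp add: p1)
  also have "\<dots> = D 1 (\<lambda>a b. D b (\<lambda>c d. p a * p (S c) * p d))" by (rule R5)
  also have "\<dots> = D 1 (\<lambda>x d. D x (\<lambda>a c. p a * p (S c) * p d))"
    by (rule CA[where sV=sA, symmetric]) (intro linK)
  also have "\<dots> = D 1 (\<lambda>x d. D x (\<lambda>a c. p a * p (S c * d)))"
    by (intro sum2_cong R3)
  also have "\<dots> = D 1 (\<lambda>a b. D b (\<lambda>c d. p a * p (S c * d)))"
    by (rule CA[where sV=sA]) (intro linK)
  also have "\<dots> = D 1 (\<lambda>a b. p a * p (es b))"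
    by (simp add: esD p_sum sum2_mult_left)
  also have "\<dots> = D 1 (\<lambda>a b. p (1*a) * p (S b))"
    by (rule W6[where sV=sA]) (intro linK)
  finally show ?thesis by (simp add: Edef)
qed

lemma E_et: "E (et w) = p (et w)"
proof -
  have "E (et w) = D (et w) (\<lambda>a b. p a * p (S b))" by (rule Edef)
  also have "\<dots> = D 1 (\<lambda>a b. p (et w * a) * p (S b))"
    by (rule DET_R[where sV=sA]) (intro linK)
  also have "\<dots> = p (et w) * E 1" by (simp add: R1E)
  finally show ?thesis by (simp add: E1)
qed

end

context PR begin

lemma R1Et: "p h * (E k * Y) = D k (\<lambda>a b. p (h * a) * (p (S b) * Y))"
  by (simp add: mult.assoc[symmetric] R1E sum2_mult_right)
lemma R2Et: "p h * (Et k * Y) = D k (\<lambda>a b. p (h * S a) * (p b * Y))"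
  by (simp add: mult.assoc[symmetric] R2E sum2_mult_right)
lemma R3Et: "E h * (p k * Y) = D h (\<lambda>a b. p a * (p (S b * k) * Y))"
  by (simp add: mult.assoc[symmetric] R3E sum2_mult_right)
lemma R4Et: "Et h * (p k * Y) = D h (\<lambda>a b. p (S a) * (p (b * k) * Y))"
  by (simp add: mult.assoc[symmetric] R4E sum2_mult_right)

lemma Ia: "E k * p (S h) = D h (\<lambda>a b. p (S a) * E (b * k))"
proof -
  have "D h (\<lambda>a b. p (S a) * E (b * k)) = D h (\<lambda>a b. D (b*k) (\<lambda>c d. p (S a * c) * p (S d)))"
    by (simp add: R1E)
  also have "\<dots> = D h (\<lambda>a b. D b (\<lambda>c d. D k (\<lambda>u v. p (S a * (c * u)) * p (S (d * v)))))"
    by (rule sum2_cong, rule MUL[where sV=sA]) (intro linK)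
  also have "\<dots> = D h (\<lambda>a b. D a (\<lambda>c d. D k (\<lambda>u v. p (S c * (d * u)) * p (S (b * v)))))"
    by (rule CA[where sV=sA, symmetric]) (intro linK)
  also have "\<dots> = D h (\<lambda>a b. D k (\<lambda>u v. p (es a * u) * p (S (b * v))))"
    by (subst sum2_swap) (simp add: esD sum2_mult_right p_sum mult.assoc)
  also have "\<dots> = D 1 (\<lambda>a b. D k (\<lambda>u v. p (a * u) * p (S (h * b * v))))"
    by (rule W2[where sV=sA and f="\<lambda>a b. D k (\<lambda>u v. p (a * u) * p (S (b * v)))"]) (intro linK)
  also have "\<dots> = D k (\<lambda>u v. p u * p (S (h * v)))"
    apply (subst ML1[where sV=sA and f="\<lambda>U V. p U * p (S (h * V))"])
     apply (intro linK)
    apply (simp add: mult.assoc)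
    done
  also have "\<dots> = E k * p (S h)" by (simp add: R3E SM)
  finally show ?thesis by simp
qed

lemma Ib: "p h * E k = D h (\<lambda>a b. E (a * k) * p b)"
proof -
  have "D h (\<lambda>a b. E (a * k) * p b) = D h (\<lambda>a b. D (a*k) (\<lambda>c d. p c * p (S d * b)))"
    by (simp add: R3E)
  also have "\<dots> = D h (\<lambda>a b. D a (\<lambda>c d. D k (\<lambda>u v. p (c*u) * p (S (d*v) * b))))"
    by (rule sum2_cong, rule MUL[where sV=sA]) (intro linK)
  also have "\<dots> = D h (\<lambda>a b. D b (\<lambda>c d. D k (\<lambda>u v. p (a*u) * p (S (c*v) * d))))"
    by (rule CA[where sV=sA]) (intro linK)
  also have "\<dots> = D h (\<lambda>a b. D k (\<lambda>u v. p (a*u) * p (S v * es b)))"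
    by (subst sum2_swap) (simp add: esD SM sum2_mult_left p_sum mult.assoc)
  also have "\<dots> = D 1 (\<lambda>a b. D k (\<lambda>u v. p (h*a*u) * p (S v * S b)))"
    by (rule W6[where sV=sA and f="\<lambda>a b. D k (\<lambda>u v. p (a*u) * p (S v * b))"]) (intro linK)
  also have "\<dots> = D k (\<lambda>u v. p (h*u) * p (S v))"
    apply (subst ML1[where sV=sA and f="\<lambda>U V. p (h*U) * p (S V)"])
     apply (intro linK)
    apply (simp add: mult.assoc SM)
    done
  also have "\<dots> = p h * E k" by (simp add: R1E)
  finally show ?thesis by simp
qed

lemma EE_expand: "X * E b = D b (\<lambda>u v. X * (p u * p (S v)))"
  by (simp add: Edef[of b] sum2_mult_left)

lemma Ic: "D h (\<lambda>a b. E a * E b) = E h"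
proof -
  have "E h = D h (\<lambda>a b. p a * p (S b))" by (rule Edef)
  also have "\<dots> = D h (\<lambda>a b. D a (\<lambda>a1 r. D r (\<lambda>c d. p a1 * p (S c) * p d)) * p (S b))"
    by (rule sum2_cong, subst R5, rule refl)
  also have "\<dots> = D h (\<lambda>a b. D a (\<lambda>a1 r. D r (\<lambda>c d. p a1 * (p (S c) * (p d * p (S b))))))"
    by (simp add: sum2_mult_right mult.assoc)
  also have "\<dots> = D h (\<lambda>a1 b. D b (\<lambda>r b'. D r (\<lambda>c d. p a1 * (p (S c) * (p d * p (S b'))))))"
    by (rule CA[where sV=sA]) (intro linK)
  also have "\<dots> = D h (\<lambda>a1 b. D b (\<lambda>c r. D r (\<lambda>d b'. p a1 * (p (S c) * (p d * p (S b'))))))"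
    by (rule sum2_cong, rule CA[where sV=sA]) (intro linK)
  also have "\<dots> = D h (\<lambda>a b. D a (\<lambda>a1 a2. D b (\<lambda>b1 b2. p a1 * (p (S a2) * (p b1 * p (S b2))))))"
    by (rule CA[where sV=sA, symmetric]) (intro linK)
  also have "\<dots> = D h (\<lambda>a b. E a * E b)"
    by (simp only: Edef sum2_mult_right) (simp add: sum2_mult_left mult.assoc)
  finally show ?thesis by simp
qed

lemma Id: "Et k * p h = D h (\<lambda>a b. p a * Et (k * b))"
proof -
  have "D h (\<lambda>a b. p a * Et (k * b)) = D h (\<lambda>a b. D (k*b) (\<lambda>c d. p (a * S c) * p d))"
    by (simp add: R2E)
  also have "\<dots> = D h (\<lambda>a b. D k (\<lambda>u v. D b (\<lambda>c d. p (a * S (u*c)) * p (v*d))))"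
    by (rule sum2_cong, rule MUL[where sV=sA]) (intro linK)
  also have "\<dots> = D h (\<lambda>a b. D b (\<lambda>c d. D k (\<lambda>u v. p (a * S (u*c)) * p (v*d))))"
    by (rule sum2_cong, rule sum2_swap)
  also have "\<dots> = D h (\<lambda>x d. D x (\<lambda>a c. D k (\<lambda>u v. p (a * S (u*c)) * p (v*d))))"
    by (rule CA[where sV=sA, symmetric]) (intro linK)
  also have "\<dots> = D h (\<lambda>x d. D k (\<lambda>u v. p (et x * S u) * p (v*d)))"
    by (subst sum2_swap) (simp add: etD SM sum2_mult_right p_sum mult.assoc)
  also have "\<dots> = D 1 (\<lambda>a b. D k (\<lambda>u v. p (S a * S u) * p (v*(b*h))))"
    by (rule W7[where sV=sA and f="\<lambda>a b. D k (\<lambda>u v. p (a * S u) * p (v*b))"]) (intro linK)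
  also have "\<dots> = D k (\<lambda>u v. D 1 (\<lambda>a b. p (S (u*a)) * p (v*b*h)))"
    by (subst sum2_swap) (simp add: SM mult.assoc)
  also have "\<dots> = D k (\<lambda>u v. p (S u) * p (v*h))"
    apply (subst MR1[where sV=sA and f="\<lambda>U V. p (S U) * p (V*h)"])
     apply (intro linK)
    apply (simp add: mult.assoc)
    done
  also have "\<dots> = Et k * p h" by (simp add: R4E)
  finally show ?thesis by simp
qed

lemma Ie: "p (S h) * Et k = D h (\<lambda>a b. Et (k * a) * p (S b))"
proof -
  have "D h (\<lambda>a b. Et (k * a) * p (S b)) = D h (\<lambda>a b. D (k*a) (\<lambda>c d. p (S c) * p (d * S b)))"
    by (simp add: R4E)
  also have "\<dots> = D h (\<lambda>a b. D k (\<lambda>u v. D a (\<lambda>c d. p (S (u*c)) * p (v*d*S b))))"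
    by (rule sum2_cong, rule MUL[where sV=sA]) (intro linK)
  also have "\<dots> = D h (\<lambda>a b. D a (\<lambda>c d. D k (\<lambda>u v. p (S (u*c)) * p (v*d*S b))))"
    by (rule sum2_cong, rule sum2_swap)
  also have "\<dots> = D h (\<lambda>a b. D b (\<lambda>c d. D k (\<lambda>u v. p (S (u*a)) * p (v*c*S d))))"
    by (rule CA[where sV=sA]) (intro linK)
  also have "\<dots> = D h (\<lambda>a b. D k (\<lambda>u v. p (S (u*a)) * p (v * et b)))"
    by (subst sum2_swap) (simp add: etD sum2_mult_left p_sum mult.assoc)
  also have "\<dots> = D 1 (\<lambda>a b. D k (\<lambda>u v. p (S (u*(a*h))) * p (v*b)))"
    by (rule W1[where sV=sA and f="\<lambda>a b. D k (\<lambda>u v. p (S (u*a)) * p (v*b))"]) (intro linK)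
  also have "\<dots> = D k (\<lambda>u v. D 1 (\<lambda>a b. p (S (u*(a*h))) * p (v*b)))"
    by (rule sum2_swap)
  also have "\<dots> = D k (\<lambda>u v. p (S (u*h)) * p v)"
    apply (subst MR1[where sV=sA and f="\<lambda>U V. p (S (U*h)) * p V"])
     apply (intro linK)
    apply (simp add: mult.assoc)
    done
  also have "\<dots> = p (S h) * Et k" by (simp add: R2E SM)
  finally show ?thesis by simp
qed

lemma If: "D h (\<lambda>a b. Et a * Et b) = Et h"
proof -
  have "Et h = D h (\<lambda>a b. p (S a) * p b)" by (rule Etdef)
  also have "\<dots> = D h (\<lambda>a b. p (S a) * D b (\<lambda>b1 r. D r (\<lambda>c d. p b1 * p (S c) * p d)))"
    by (rule sum2_cong, subst R5[of b for b], rule refl)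
  also have "\<dots> = D h (\<lambda>a b. D b (\<lambda>b1 r. D r (\<lambda>c d. p (S a) * (p b1 * (p (S c) * p d)))))"
    by (simp add: sum2_mult_left mult.assoc)
  also have "\<dots> = D h (\<lambda>a b. D a (\<lambda>a1 a2. D b (\<lambda>b1 b2. p (S a1) * (p a2 * (p (S b1) * p b2)))))"
    by (rule CA[where sV=sA, symmetric]) (intro linK)
  also have "\<dots> = D h (\<lambda>a b. Et a * Et b)"
    by (simp only: Etdef sum2_mult_right) (simp add: sum2_mult_left mult.assoc)
  finally show ?thesis by simp
qed

lemma Ig: "p h * E k = D h (\<lambda>a b. p a * E k * Et b)"
proof -
  have "D h (\<lambda>a b. p a * E k * Et b) = D h (\<lambda>a b. D k (\<lambda>u v. p (a*u) * (p (S v) * Et b)))"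
    by (simp add: R1E sum2_mult_right mult.assoc)
  also have "\<dots> = D h (\<lambda>a b. D k (\<lambda>u v. D b (\<lambda>c d. p (a*u) * (p (S (c*v)) * p d))))"
    by (simp add: R2E SM sum2_mult_left mult.assoc)
  also have "\<dots> = D h (\<lambda>a b. D b (\<lambda>c d. D k (\<lambda>u v. p (a*u) * (p (S (c*v)) * p d))))"
    by (rule sum2_cong, rule sum2_swap)
  also have "\<dots> = D h (\<lambda>x d. D x (\<lambda>a c. D k (\<lambda>u v. p (a*u) * (p (S (c*v)) * p d))))"
    by (rule CA[where sV=sA, symmetric]) (intro linK)
  also have "\<dots> = D h (\<lambda>x d. D (x*k) (\<lambda>y z. p y * (p (S z) * p d)))"
    by (rule sum2_cong, rule MUL[where sV=sA, symmetric]) (intro linK)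
  also have "\<dots> = D h (\<lambda>x d. E (x*k) * p d)"
    by (simp add: Edef sum2_mult_right mult.assoc)
  also have "\<dots> = p h * E k" by (simp add: Ib)
  finally show ?thesis by simp
qed

lemma Ih: "E k * p (S h) = D h (\<lambda>a b. Et a * E k * p (S b))"
proof -
  have "D h (\<lambda>a b. Et a * E k * p (S b)) = D h (\<lambda>a b. D k (\<lambda>u v. Et a * (p u * p (S (b*v)))))"
    by (simp add: mult.assoc R3E SM sum2_mult_left)
  also have "\<dots> = D h (\<lambda>a b. D k (\<lambda>u v. D a (\<lambda>c d. p (S c) * (p (d*u) * p (S (b*v))))))"
    by (simp add: R4Et)
  also have "\<dots> = D h (\<lambda>a b. D a (\<lambda>c d. D k (\<lambda>u v. p (S c) * (p (d*u) * p (S (b*v))))))"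
    by (rule sum2_cong, rule sum2_swap)
  also have "\<dots> = D h (\<lambda>c r. D r (\<lambda>d b. D k (\<lambda>u v. p (S c) * (p (d*u) * p (S (b*v))))))"
    by (rule CA[where sV=sA]) (intro linK)
  also have "\<dots> = D h (\<lambda>c r. D (r*k) (\<lambda>y z. p (S c) * (p y * p (S z))))"
    by (rule sum2_cong, rule MUL[where sV=sA, symmetric]) (intro linK)
  also have "\<dots> = D h (\<lambda>a b. p (S a) * E (b*k))"
    by (simp add: Edef sum2_mult_left)
  also have "\<dots> = E k * p (S h)" by (simp add: Ia)
  finally show ?thesis by simp
qed

lemma Ii: "Et k * p h = D h (\<lambda>a b. E a * Et k * p b)"
proof -
  have "D h (\<lambda>a b. E a * Et k * p b) = D h (\<lambda>a b. D k (\<lambda>u v. E a * (p (S u) * p (v*b))))"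
    by (simp add: mult.assoc R4E sum2_mult_left)
  also have "\<dots> = D h (\<lambda>a b. D k (\<lambda>u v. D a (\<lambda>c d. p c * (p (S d * S u) * p (v*b)))))"
    by (simp add: R3Et)
  also have "\<dots> = D h (\<lambda>a b. D a (\<lambda>c d. D k (\<lambda>u v. p c * (p (S (u*d)) * p (v*b)))))"
    by (rule sum2_cong, subst sum2_swap, simp add: SM)
  also have "\<dots> = D h (\<lambda>c r. D r (\<lambda>d b. D k (\<lambda>u v. p c * (p (S (u*d)) * p (v*b)))))"
    by (rule CA[where sV=sA]) (intro linK)
  also have "\<dots> = D h (\<lambda>c r. D k (\<lambda>u v. D r (\<lambda>d b. p c * (p (S (u*d)) * p (v*b)))))"
    by (rule sum2_cong, rule sum2_swap)
  also have "\<dots> = D h (\<lambda>c r. D (k*r) (\<lambda>y z. p c * (p (S y) * p z)))"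
    by (rule sum2_cong, rule MUL[where sV=sA, symmetric]) (intro linK)
  also have "\<dots> = D h (\<lambda>a b. p a * Et (k*b))"
    by (simp add: Etdef sum2_mult_left)
  also have "\<dots> = Et k * p h" by (simp add: Id)
  finally show ?thesis by simp
qed

lemma Ij: "p (S h) * Et k = D h (\<lambda>a b. p (S a) * Et k * E b)"
proof -
  have "D h (\<lambda>a b. p (S a) * Et k * E b) = D h (\<lambda>a b. D k (\<lambda>u v. p (S (u*a)) * (p v * E b)))"
    by (simp add: R2E SM sum2_mult_right mult.assoc)
  also have "\<dots> = D h (\<lambda>a b. D k (\<lambda>u v. D b (\<lambda>c d. p (S (u*a)) * (p (v*c) * p (S d)))))"
    by (simp add: R1E sum2_mult_left)
  also have "\<dots> = D h (\<lambda>a b. D b (\<lambda>c d. D k (\<lambda>u v. p (S (u*a)) * (p (v*c) * p (S d)))))"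
    by (rule sum2_cong, rule sum2_swap)
  also have "\<dots> = D h (\<lambda>x d. D x (\<lambda>a c. D k (\<lambda>u v. p (S (u*a)) * (p (v*c) * p (S d)))))"
    by (rule CA[where sV=sA, symmetric]) (intro linK)
  also have "\<dots> = D h (\<lambda>x d. D k (\<lambda>u v. D x (\<lambda>a c. p (S (u*a)) * (p (v*c) * p (S d)))))"
    by (rule sum2_cong, rule sum2_swap)
  also have "\<dots> = D h (\<lambda>x d. D (k*x) (\<lambda>y z. p (S y) * (p z * p (S d))))"
    by (rule sum2_cong, rule MUL[where sV=sA, symmetric]) (intro linK)
  also have "\<dots> = D h (\<lambda>a b. Et (k*a) * p (S b))"
    by (simp add: Etdef sum2_mult_right mult.assoc)
  also have "\<dots> = p (S h) * Et k" by (simp add: Ie)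
  finally show ?thesis by simp
qed

lemma Ik: "E h * Et k = Et k * E h"
proof -
  have "Et k * E h = D h (\<lambda>a b. Et k * p a * p (S b))"
    by (simp add: Edef[of h] sum2_mult_left mult.assoc)
  also have "\<dots> = D h (\<lambda>a b. D a (\<lambda>c d. E c * Et k * p d * p (S b)))"
    by (rule sum2_cong, subst Ii, simp add: sum2_mult_right)
  also have "\<dots> = D h (\<lambda>c r. D r (\<lambda>d b. E c * Et k * p d * p (S b)))"
    by (rule CA[where sV=sA]) (intro linK)
  also have "\<dots> = D h (\<lambda>c r. E c * Et k * E r)"
    by (simp add: Edef[of "_::'h"] sum2_mult_left mult.assoc)
  finally have 1: "Et k * E h = D h (\<lambda>c r. E c * Et k * E r)" .
  have "E h * Et k = D h (\<lambda>a b. p a * (p (S b) * Et k))"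
    by (simp add: Edef[of h] sum2_mult_right mult.assoc)
  also have "\<dots> = D h (\<lambda>a b. p a * D b (\<lambda>c d. p (S c) * Et k * E d))"
    by (rule sum2_cong, subst Ij, rule refl)
  also have "\<dots> = D h (\<lambda>a b. D b (\<lambda>c d. p a * p (S c) * Et k * E d))"
    by (simp add: sum2_mult_left mult.assoc)
  also have "\<dots> = D h (\<lambda>r d. D r (\<lambda>a c. p a * p (S c) * Et k * E d))"
    by (rule CA[where sV=sA, symmetric]) (intro linK)
  also have "\<dots> = D h (\<lambda>c r. E c * Et k * E r)"
    by (simp add: Edef[of "_::'h"] sum2_mult_right mult.assoc)
  finally show ?thesis using 1 by simp
qed

end

context PR begin

lemma Im: "sum3 (cop2 cop h) (\<lambda>a b c. E (a * S c) * E b) = E h"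
proof -
  have "sum3 (cop2 cop h) (\<lambda>a b c. E (a * S c) * E b) = D h (\<lambda>a r. D r (\<lambda>b c. E (a * S c) * E b))"
    by (rule D3)
  also have "\<dots> = D h (\<lambda>a r. D r (\<lambda>b c. D b (\<lambda>u v. E (a * S c) * (p u * p (S v)))))"
    by (simp only: EE_expand)
  also have "\<dots> = D h (\<lambda>a r. D r (\<lambda>u w. D w (\<lambda>v c. E (a * S c) * (p u * p (S v)))))"
    by (rule sum2_cong, rule CA[where sV=sA]) (intro linK)
  also have "\<dots> = D h (\<lambda>y w. D y (\<lambda>a u. D w (\<lambda>v c. E (a * S c) * (p u * p (S v)))))"
    by (rule CA[where sV=sA, symmetric]) (intro linK)
  also have "\<dots> = D h (\<lambda>y w. D w (\<lambda>v c. D y (\<lambda>a u. E (a * S c) * p u) * p (S v)))"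
    by (rule sum2_cong, subst sum2_swap, simp add: sum2_mult_right mult.assoc)
  also have "\<dots> = D h (\<lambda>y w. D w (\<lambda>v c. p y * E (S c) * p (S v)))"
    by (simp add: Ib)
  also have "\<dots> = D h (\<lambda>y w. p y * D w (\<lambda>v c. D v (\<lambda>a b. p (S a) * E (b * S c))))"
    by (simp add: mult.assoc Ia sum2_mult_left)
  also have "\<dots> = D h (\<lambda>y w. p y * D w (\<lambda>a r. D r (\<lambda>b c. p (S a) * E (b * S c))))"
    by (rule sum2_cong, rule arg_cong2[where f="(*)"], rule refl, rule CA[where sV=sA]) (intro linK)
  also have "\<dots> = D h (\<lambda>y w. p y * D w (\<lambda>a r. p (S a) * E (et r)))"
    by (simp add: etD[of "_::'h"] E_sum sum2_mult_left)
  also have "\<dots> = D h (\<lambda>y w. p y * D w (\<lambda>a r. p (S a) * p (et r)))"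
    by (simp only: E_et)
  also have "\<dots> = D h (\<lambda>y w. D w (\<lambda>a r. p y * p (S a) * p (et r)))"
    by (simp add: sum2_mult_left mult.assoc)
  also have "\<dots> = D h (\<lambda>x r. D x (\<lambda>y a. p y * p (S a) * p (et r)))"
    by (rule CA[where sV=sA, symmetric]) (intro linK)
  also have "\<dots> = D h (\<lambda>x r. D x (\<lambda>y a. p y * p (S a * et r)))"
    by (rule sum2_cong, rule R3)
  also have "\<dots> = D h (\<lambda>y w. D w (\<lambda>a r. p y * p (S a * et r)))"
    by (rule CA[where sV=sA]) (intro linK)
  also have "\<dots> = D h (\<lambda>y w. p y * p (S w))"
  proof (rule sum2_cong)
    fix y w show "D w (\<lambda>a r. p y * p (S a * et r)) = p y * p (S w)"
      by (simp only: ANT4[of w] p_sum sum2_mult_left)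
  qed
  also have "\<dots> = E h" by (simp add: Edef)
  finally show ?thesis .
qed

lemma EtE_expand: "X * Et b = D b (\<lambda>u v. X * (p (S u) * p v))"
  by (simp add: Etdef[of b] sum2_mult_left)

lemma Si_SS: "bij S \<Longrightarrow> S (inv S x) = x"
  by (simp add: bij_def surj_f_inv_f)
lemma Si_S: "bij S \<Longrightarrow> inv S (S x) = x"
  by (simp add: bij_def inv_f_f)

lemma Si_lin: assumes b: "bij S" shows "Vector_Spaces.linear s s (inv S)"
proof -
  interpret L: linear s s S by (rule lin_S)
  have add: "inv S (x + y) = inv S x + inv S y" for x y
  proof -
    have "inv S (x + y) = inv S (S (inv S x) + S (inv S y))" by (simp add: Si_SS[OF b])
    also have "\<dots> = inv S (S (inv S x + inv S y))" by (simp add: L.add)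
    finally show ?thesis by (simp add: Si_S[OF b])
  qed
  have sc: "inv S (s c x) = s c (inv S x)" for c x
  proof -
    have "inv S (s c x) = inv S (s c (S (inv S x)))" by (simp add: Si_SS[OF b])
    also have "\<dots> = inv S (S (s c (inv S x)))" by (simp add: L.scale)
    finally show ?thesis by (simp add: Si_S[OF b])
  qed
  show ?thesis unfolding Vector_Spaces.linear_iff using vsH add sc by blast
qed

lemma Si_anti: assumes b: "bij S" shows "inv S (x * y) = inv S y * inv S x"
proof -
  have "inv S (x * y) = inv S (S (inv S x) * S (inv S y))" by (simp add: Si_SS[OF b])
  also have "\<dots> = inv S (S (inv S y * inv S x))" by (simp add: SM)
  finally show ?thesis by (simp add: Si_S[OF b])
qed

lemma Lk: assumes b: "bij S" shows "p y * Et k = D y (\<lambda>a b. Et (k * inv S b) * p a)"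
proof -
  note Sil = Si_lin[OF b]
  have "D y (\<lambda>a b. Et (k * inv S b) * p a) = D y (\<lambda>a b. D a (\<lambda>c d. p c * Et (k * inv S b * d)))"
    by (simp add: Id)
  also have "\<dots> = D y (\<lambda>c r. D r (\<lambda>d b. p c * Et (k * inv S b * d)))"
    by (rule CA[where sV=sA]) (intro linK L_comp[OF _ Sil])
  also have "\<dots> = D y (\<lambda>c r. p c * Et (k * inv S (es r)))"
    by (simp add: esD lin_sum[OF Sil] Si_anti[OF b] Si_S[OF b] sum2_mult_left Et_sum mult.assoc)
  also have "\<dots> = D 1 (\<lambda>a b. p (y*a) * Et (k * inv S (S b)))"
    by (rule W6[where sV=sA and f="\<lambda>a b. p a * Et (k * inv S b)"]) ((intro linK L_comp[OF _ Sil]) | rule Sil)+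
  also have "\<dots> = D 1 (\<lambda>a b. D (k*b) (\<lambda>c d. p (y*a*S c) * p d))"
    by (simp add: Si_S[OF b] R2E)
  also have "\<dots> = D 1 (\<lambda>a b. D k (\<lambda>u v. D b (\<lambda>c d. p (y*a*S (u*c)) * p (v*d))))"
    by (rule sum2_cong, rule MUL[where sV=sA]) (intro linK)
  also have "\<dots> = D k (\<lambda>u v. D 1 (\<lambda>a b. D b (\<lambda>c d. p (y*a*(S c * S u)) * p (v*d))))"
    by (subst sum2_swap) (simp add: SM)
  also have "\<dots> = D k (\<lambda>u v. D 1 (\<lambda>x d. D x (\<lambda>a c. p (y*a*(S c * S u)) * p (v*d))))"
    by (rule sum2_cong, rule CA[where sV=sA, symmetric]) (intro linK)
  also have "\<dots> = D k (\<lambda>u v. D 1 (\<lambda>x d. p (y * et x * S u) * p (v*d)))"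
    by (simp add: etD[of "_::'h"] sum2_mult_left sum2_mult_right p_sum mult.assoc)
  also have "\<dots> = D k (\<lambda>u v. D 1 (\<lambda>x d. p (y * S (u*x)) * p (v*d)))"
  proof (rule sum2_cong)
    fix u v
    have "D 1 (\<lambda>x d. p (y * et x * S u) * p (v*d)) = D 1 (\<lambda>a b. p (y * S a * S u) * p (v*(b*1)))"
      by (rule W7[where sV=sA and f="\<lambda>a b. p (y * a * S u) * p (v*b)"]) (intro linK)
    then show "D 1 (\<lambda>x d. p (y * et x * S u) * p (v*d)) = D 1 (\<lambda>x d. p (y * S (u*x)) * p (v*d))"
      by (simp add: SM mult.assoc)
  qed
  also have "\<dots> = D k (\<lambda>u v. p (y * S u) * p v)"
    apply (subst MR1[where sV=sA and f="\<lambda>U V. p (y * S U) * p V"])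
     apply (intro linK)
    apply (simp add: mult.assoc)
    done
  also have "\<dots> = p y * Et k" by (simp add: R2E)
  finally show ?thesis by simp
qed

lemma Il: assumes b: "bij S"
  shows "sum3 (cop2 cop h) (\<lambda>a b c. Et (k * inv S c * a) * Et b) = Et h * Et k"
proof -
  note Sil = Si_lin[OF b]
  have "Et h * Et k = D h (\<lambda>a b. p (S a) * (p b * Et k))"
    by (simp add: Etdef[of h] sum2_mult_right mult.assoc)
  also have "\<dots> = D h (\<lambda>a b. p (S a) * D b (\<lambda>c d. Et (k * inv S d) * p c))"
    by (rule sum2_cong, subst Lk[OF b], rule refl)
  also have "\<dots> = D h (\<lambda>a r. D r (\<lambda>c d. p (S a) * Et (k * inv S d) * p c))"
    by (simp add: sum2_mult_left mult.assoc)
  also have "\<dots> = D h (\<lambda>x d. D x (\<lambda>a c. p (S a) * Et (k * inv S d) * p c))"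
    by (rule CA[where sV=sA, symmetric]) (intro linK Sil L_comp[OF _ Sil])
  also have "\<dots> = D h (\<lambda>x d. D x (\<lambda>a c. D a (\<lambda>a1 a2. Et (k * inv S d * a1) * p (S a2)) * p c))"
    by (rule sum2_cong, rule sum2_cong, subst Ie, rule refl)
  also have "\<dots> = D h (\<lambda>x d. D x (\<lambda>a c. D a (\<lambda>a1 a2. Et (k * inv S d * a1) * (p (S a2) * p c))))"
    by (simp add: sum2_mult_right mult.assoc)
  also have "\<dots> = D h (\<lambda>x d. D x (\<lambda>a1 w. D w (\<lambda>a2 c. Et (k * inv S d * a1) * (p (S a2) * p c))))"
    by (rule sum2_cong, rule CA[where sV=sA]) (intro linK Sil L_comp[OF _ Sil])
  also have "\<dots> = D h (\<lambda>x d. D x (\<lambda>a1 w. Et (k * inv S d * a1) * Et w))"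
    by (simp only: EtE_expand)
  also have "\<dots> = D h (\<lambda>a1 r. D r (\<lambda>w d. Et (k * inv S d * a1) * Et w))"
    by (rule CA[where sV=sA]) (intro linK Sil L_comp[OF _ Sil])
  also have "\<dots> = sum3 (cop2 cop h) (\<lambda>a b c. Et (k * inv S c * a) * Et b)"
    by (rule D3[symmetric])
  finally show ?thesis by simp
qed

lemma LX: assumes g: "bil s sV g"
  shows "D w (\<lambda>a r. D r (\<lambda>b c. D a (\<lambda>p q. g (p * S c) (q * S b)))) = D (et w) g"
proof -
  have vs: "Vector_Spaces.vector_space sV" by (rule bil_vs[OF g])
  note lf = B1[OF g] B2[OF g] vs
  have "D w (\<lambda>a r. D r (\<lambda>b c. D a (\<lambda>p q. g (p * S c) (q * S b))))
      = D w (\<lambda>a r. D a (\<lambda>p q. D r (\<lambda>b c. g (p * S c) (q * S b))))"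
    by (rule sum2_cong, rule sum2_swap)
  also have "\<dots> = D w (\<lambda>p t. D t (\<lambda>q r. D r (\<lambda>b c. g (p * S c) (q * S b))))"
    by (rule CA[where sV=sV]) (intro linJ lf)
  also have "\<dots> = D w (\<lambda>p t. D t (\<lambda>m c. D m (\<lambda>q b. g (p * S c) (q * S b))))"
    by (rule sum2_cong, rule CA[where sV=sV, symmetric]) (intro linJ lf)
  also have "\<dots> = D w (\<lambda>p t. D t (\<lambda>m c. g (p * S c) (et m)))"
    by (simp add: etD[of "_::'h"] bil_sum2[OF g])
  also have "\<dots> = D w (\<lambda>y c. D y (\<lambda>p m. g (p * S c) (et m)))"
    by (rule CA[where sV=sV, symmetric]) (intro linJ lf)
  also have "\<dots> = D w (\<lambda>y c. D 1 (\<lambda>a b. g (a * y * S c) b))"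
    by (rule sum2_cong, rule W1[where sV=sV and f="\<lambda>P M. g (P * S c) M" for c]) (intro linJ lf)
  also have "\<dots> = D 1 (\<lambda>a b. D w (\<lambda>y c. g (a * (y * S c)) b))"
    by (subst sum2_swap) (simp add: mult.assoc)
  also have "\<dots> = D 1 (\<lambda>a b. g (a * et w) b)"
    by (simp add: etD[of w] bil_sum1[OF g] sum2_mult_left)
  also have "\<dots> = D (et w) g"
    by (rule DET_L[where sV=sV, symmetric]) (rule g)
  finally show ?thesis .
qed

lemma AC: assumes f: "bil s sV f"
  shows "D (S x) f = D x (\<lambda>a b. f (S b) (S a))"
proof -
  have vs: "Vector_Spaces.vector_space sV" by (rule bil_vs[OF f])
  note lf = B1[OF f] B2[OF f] vs
  define M where "M = D x (\<lambda>x1 r. D r (\<lambda>x2 r2. D r2 (\<lambda>x3 x4. D (S x1) (\<lambda>p q. D x2 (\<lambda>p' q'. f (p * (p' * S x4)) (q * (q' * S x3)))))))"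
  have "M = D x (\<lambda>x1 r. D (S x1) (\<lambda>p q. D r (\<lambda>x2 r2. D r2 (\<lambda>x3 x4. D x2 (\<lambda>p' q'. f (p * (p' * S x4)) (q * (q' * S x3)))))))"
    unfolding M_def by (simp only: sum2_swap[of "cop _" "cop (S _)"])
  also have "\<dots> = D x (\<lambda>x1 r. D (S x1) (\<lambda>p q. D (et r) (\<lambda>p' q'. f (p * p') (q * q'))))"
    by (rule sum2_cong, rule sum2_cong, rule LX[where sV=sV and g="\<lambda>p' q'. f (p * p') (q * q')" for p q]) (intro linJ lf)
  also have "\<dots> = D x (\<lambda>x1 r. D (S x1 * et r) f)"
    by (rule sum2_cong, rule MUL[where sV=sV, symmetric]) (rule f)
  also have "\<dots> = D (S x) f"
    by (simp add: ANT4[of x] D_sum[OF f])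
  finally have M2: "M = D (S x) f" .
  have "M = D x (\<lambda>y r2. D y (\<lambda>x1 x2. D r2 (\<lambda>x3 x4. D (S x1) (\<lambda>p q. D x2 (\<lambda>p' q'. f (p * (p' * S x4)) (q * (q' * S x3)))))))"
    unfolding M_def by (rule CA[where sV=sV, symmetric]) (intro linJ lf)
  also have "\<dots> = D x (\<lambda>y r2. D r2 (\<lambda>x3 x4. D y (\<lambda>x1 x2. D (S x1) (\<lambda>p q. D x2 (\<lambda>p' q'. f (p * (p' * S x4)) (q * (q' * S x3)))))))"
    by (rule sum2_cong, rule sum2_swap)
  also have "\<dots> = D x (\<lambda>y r2. D r2 (\<lambda>x3 x4. D y (\<lambda>x1 x2. D (S x1 * x2) (\<lambda>P Q. f (P * S x4) (Q * S x3)))))"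
    apply (rule sum2_cong, rule sum2_cong, rule sum2_cong)
    apply (subst MUL[where sV=sV])
     apply (intro linJ lf)
    apply (simp add: mult.assoc)
    done
  also have "\<dots> = D x (\<lambda>y r2. D r2 (\<lambda>x3 x4. D (es y) (\<lambda>P Q. f (P * S x4) (Q * S x3))))"
    by (intro sum2_cong) (simp add: esD[of y for y] D_sum[where sV=sV] bilI lf linJ)
  also have "\<dots> = D x (\<lambda>y r2. D r2 (\<lambda>x3 x4. D 1 (\<lambda>a b. f (a * S x4) (b * es y * S x3))))"
    by (rule sum2_cong, rule sum2_cong, rule DES_L[where sV=sV]) (intro linJ lf)
  also have "\<dots> = D x (\<lambda>z x4. D z (\<lambda>y x3. D 1 (\<lambda>a b. f (a * S x4) (b * es y * S x3))))"
    by (rule CA[where sV=sV, symmetric]) (intro linJ lf)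
  also have "\<dots> = D x (\<lambda>z x4. D 1 (\<lambda>a b. f (a * S x4) (b * S z)))"
  proof (rule sum2_cong)
    fix z x4
    have "D z (\<lambda>y x3. D 1 (\<lambda>a b. f (a * S x4) (b * es y * S x3)))
        = D 1 (\<lambda>a b. D z (\<lambda>y x3. f (a * S x4) (b * (es y * S x3))))"
      by (subst sum2_swap) (simp add: mult.assoc)
    also have "\<dots> = D 1 (\<lambda>a b. f (a * S x4) (b * S z))"
      by (simp only: ANT5[of z] sum2_mult_left bil_sum2[OF f])
    finally show "D z (\<lambda>y x3. D 1 (\<lambda>a b. f (a * S x4) (b * es y * S x3))) = D 1 (\<lambda>a b. f (a * S x4) (b * S z))" .
  qed
  also have "\<dots> = D x (\<lambda>z w. D 1 (\<lambda>c d. f (S d * S w) (S c * S z)))"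
    by (rule sum2_cong, rule U[where sV=sV and f="\<lambda>c d. f (c * S w) (d * S z)" for w z, symmetric]) (intro linJ lf)
  also have "\<dots> = D x (\<lambda>z w. f (S w) (S z))"
    apply (subst MR1[where sV=sV and f="\<lambda>z w. f (S w) (S z)"])
     apply (intro linJ lf)
    apply (simp add: SM)
    done
  finally show ?thesis using M2 by simp
qed

lemma COC: assumes c: "cocommutative s cop" and f: "bil s sV f"
  shows "D h f = D h (\<lambda>a b. f b a)"
proof -
  have "teq2 s (cop h) (map (\<lambda>(a,b). (b,a)) (cop h))" using c unfolding cocommutative_def by blast
  from teq2_transfer[OF this f] show ?thesis by (simp add: sum2_map)
qed

lemma Fn: assumes c: "cocommutative s cop"
  shows "E h * E k = D 1 (\<lambda>a b. E (b * k) * E (a * h))"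
proof -
  have "E h * E k = D h (\<lambda>a b. p a * (p (S b) * E k))"
    by (simp add: Edef[of h] sum2_mult_right mult.assoc)
  also have "\<dots> = D h (\<lambda>a b. p a * D (S b) (\<lambda>c d. E (c * k) * p d))"
    by (rule sum2_cong, subst Ib, rule refl)
  also have "\<dots> = D h (\<lambda>a b. p a * D b (\<lambda>c d. E (S d * k) * p (S c)))"
    by (rule sum2_cong, rule arg_cong2[where f="(*)"], rule refl, rule AC[where sV=sA]) (intro linK)
  also have "\<dots> = D h (\<lambda>a r. D r (\<lambda>c d. p a * E (S d * k) * p (S c)))"
    by (simp add: sum2_mult_left mult.assoc)
  also have "\<dots> = D h (\<lambda>x d. D x (\<lambda>a c. p a * E (S d * k) * p (S c)))"
    by (rule CA[where sV=sA, symmetric]) (intro linK)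
  also have "\<dots> = D h (\<lambda>x d. D x (\<lambda>a c. D a (\<lambda>a1 a2. E (a1 * (S d * k)) * p a2) * p (S c)))"
    by (rule sum2_cong, rule sum2_cong, subst Ib, rule refl)
  also have "\<dots> = D h (\<lambda>x d. D x (\<lambda>a c. D a (\<lambda>a1 a2. E (a1 * (S d * k)) * (p a2 * p (S c)))))"
    by (simp add: sum2_mult_right mult.assoc)
  also have "\<dots> = D h (\<lambda>x d. D x (\<lambda>a1 w. D w (\<lambda>a2 c. E (a1 * (S d * k)) * (p a2 * p (S c)))))"
    by (rule sum2_cong, rule CA[where sV=sA]) (intro linK)
  also have "\<dots> = D h (\<lambda>x d. D x (\<lambda>a1 w. E (a1 * (S d * k)) * E w))"
    by (simp only: EE_expand)
  also have "\<dots> = D h (\<lambda>x d. D x (\<lambda>a1 w. E (w * (S d * k)) * E a1))"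
    by (rule sum2_cong, rule COC[OF c, where sV=sA]) (intro linK)
  also have "\<dots> = D h (\<lambda>a1 r. D r (\<lambda>w d. E (w * (S d * k)) * E a1))"
    by (rule CA[where sV=sA]) (intro linK)
  also have "\<dots> = D h (\<lambda>a1 r. E (et r * k) * E a1)"
    by (simp add: etD[of "_::'h"] sum2_mult_right E_sum mult.assoc)
  also have "\<dots> = D 1 (\<lambda>a b. E (b * k) * E (a * h))"
    by (rule W1[where sV=sA and f="\<lambda>a b. E (b * k) * E a"]) (intro linK)
  finally show ?thesis .
qed

lemma In: assumes c: "cocommutative s cop"
  shows "E h * E k = E k * E h"
proof -
  have "E h * E k = D 1 (\<lambda>a b. E (b*k) * E (a*h))" by (rule Fn[OF c])
  also have "\<dots> = D 1 (\<lambda>a b. D 1 (\<lambda>c d. E (d * (a*h)) * E (c * (b*k))))"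
    by (rule sum2_cong, rule Fn[OF c])
  also have "\<dots> = D 1 (\<lambda>a b. D 1 (\<lambda>c d. E (c * (a*h)) * E (d * (b*k))))"
    by (rule sum2_cong, rule COC[OF c, where sV=sA]) (intro linK)
  also have "\<dots> = D 1 (\<lambda>c d. D 1 (\<lambda>a b. E (c * (a*h)) * E (d * (b*k))))"
    by (rule sum2_swap)
  also have "\<dots> = D 1 (\<lambda>u v. E (u*h) * E (v*k))"
    apply (subst ML1[where sV=sA and h=1 and f="\<lambda>U V. E (U*h) * E (V*k)"])
     apply (intro linK)
    apply (simp add: mult.assoc)
    done
  finally have 1: "E h * E k = D 1 (\<lambda>u v. E (u*h) * E (v*k))" .
  have "E k * E h = D 1 (\<lambda>a b. E (b*h) * E (a*k))" by (rule Fn[OF c])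
  also have "\<dots> = D 1 (\<lambda>a b. E (a*h) * E (b*k))"
    by (rule COC[OF c, where sV=sA]) (intro linK)
  finally show ?thesis using 1 by simp
qed

end

theorem proposition4p4:
  fixes s :: "'k::field \<Rightarrow> 'h::{ring,monoid_mult} \<Rightarrow> 'h"
    and cop :: "'h \<Rightarrow> ('h \<times> 'h) list" and eps :: "'h \<Rightarrow> 'k" and S :: "'h \<Rightarrow> 'h"
    and sA :: "'k \<Rightarrow> 'a::{ring,monoid_mult} \<Rightarrow> 'a" and p :: "'h \<Rightarrow> 'a"
  assumes wha: "weak_hopf_algebra s cop eps S"
    and par: "par_rep s cop S sA p"
  defines "E \<equiv> Epar cop S p" and "Et \<equiv> Etpar cop S p"
  shows "\<forall>h k.
      E k * p (S h) = sum2 (cop h) (\<lambda>a b. p (S a) * E (b * k))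
    \<and> p h * E k = sum2 (cop h) (\<lambda>a b. E (a * k) * p b)
    \<and> sum2 (cop h) (\<lambda>a b. E a * E b) = E h
    \<and> Et k * p h = sum2 (cop h) (\<lambda>a b. p a * Et (k * b))
    \<and> p (S h) * Et k = sum2 (cop h) (\<lambda>a b. Et (k * a) * p (S b))
    \<and> sum2 (cop h) (\<lambda>a b. Et a * Et b) = Et h
    \<and> p h * E k = sum2 (cop h) (\<lambda>a b. p a * E k * Et b)
    \<and> E k * p (S h) = sum2 (cop h) (\<lambda>a b. Et a * E k * p (S b))
    \<and> Et k * p h = sum2 (cop h) (\<lambda>a b. E a * Et k * p b)
    \<and> p (S h) * Et k = sum2 (cop h) (\<lambda>a b. p (S a) * Et k * E b)
    \<and> E h * Et k = Et k * E h
    \<and> (bij S \<longrightarrow> sum3 (cop2 cop h) (\<lambda>a b c. Et (k * inv S c * a) * Et b) = Et h * Et k)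
    \<and> sum3 (cop2 cop h) (\<lambda>a b c. E (a * S c) * E b) = E h
    \<and> (cocommutative s cop \<longrightarrow> E h * E k = E k * E h)"
proof -
  interpret P: PR s cop eps S sA p
    by (simp add: PR_def PR_axioms_def WH_def wha par)
  show ?thesis
    unfolding E_def Et_def
    apply (intro allI conjI impI)
                apply (rule P.Ia)
               apply (rule P.Ib)
              apply (rule P.Ic)
             apply (rule P.Id)
            apply (rule P.Ie)
           apply (rule P.If)
          apply (rule P.Ig)
         apply (rule P.Ih)
        apply (rule P.Ii)
       apply (rule P.Ij)
      apply (rule P.Ik)
     apply (erule P.Il)
    apply (rule P.Im)
   apply (erule P.In)
    done
qed

end
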